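(* Consider an open quantum system on a finite-dimensional Hilbert space $\mathcal H$ with Hamiltonian $H$. Let $W_1,\dots,W_N$ be observables commuting with $H$, each positive semidefinite with smallest eigenvalue $0$, with $[W_\lambda,W_{\lambda'}]=0$ for $\lambda\neq\lambda'$. Let the coupling operators be $L_k=U_kW_k$, $k=1,\dots,N$, with $U_k$ unitary, and assume $[U_{k'},W_\lambda]=0$ whenever $k'\neq\lambda$. Suppose that for each $\lambda$ either $\mathcal G(W_\lambda)_{L_\lambda}\le-c_\lambda W_\lambda$ for some $c_\lambda>0$, or $\mathcal G(W_\lambda)_{L_\lambda}\le0$ and $\mathfrak D(W_\lambda)_{L_\lambda}\ge c_\lambda W_\lambda$ for some $c_\lambda>0$. Then $W=\sum_{\lambda=1}^NW_\lambda$ is asymptotically ground-state stable.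
   Context: The density state (positive semidefinite, trace one) evolves by $\dot\rho_t=-i[H,\rho_t]+\sum_{k=1}^N\big(L_k\rho_tL_k^\dagger-\tfrac12L_k^\dagger L_k\rho_t-\tfrac12\rho_tL_k^\dagger L_k\big)$. Single-channel generator component: $\mathcal G(X)_{L_k}=L_k^\dagger XL_k-\tfrac12L_k^\dagger L_kX-\tfrac12XL_k^\dagger L_k$; for $X$ commuting with $H$, $\frac{d}{dt}\operatorname{tr}(X\rho_t)=\operatorname{tr}(\sum_k\mathcal G(X)_{L_k}\rho_t)$. Single-channel dissipation functional for self-adjoint $X$: $\mathfrak D(X)_{L_k}=[L_k^\dagger,X][X,L_k]$. An observable $X$ with smallest eigenvalue $d$ is asymptotically ground-state stable if $\operatorname{tr}(X\rho_t)\to d$ as $t\to\infty$ for every initial density state. *)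

theory Defs
  imports "HOL-Analysis.Analysis"
begin

type_synonym 'n cmat = "complex^'n^'n"

definition cadj :: "'n::finite cmat \<Rightarrow> 'n cmat" where
  "cadj A = (\<chi> i j. cnj (A $ j $ i))"

definition mtrace :: "'n::finite cmat \<Rightarrow> complex" where
  "mtrace A = (\<Sum>i\<in>UNIV. A $ i $ i)"

definition mscale :: "complex \<Rightarrow> 'n::finite cmat \<Rightarrow> 'n cmat" (infixr "*\<^sub>m" 75) where
  "c *\<^sub>m A = (\<chi> i j. c * A $ i $ j)"

definition comm :: "'n::finite cmat \<Rightarrow> 'n cmat \<Rightarrow> 'n cmat" where
  "comm A B = A ** B - B ** A"

definition self_adjoint :: "'n::finite cmat \<Rightarrow> bool" where
  "self_adjoint A \<longleftrightarrow> cadj A = A"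

definition unitary :: "'n::finite cmat \<Rightarrow> bool" where
  "unitary U \<longleftrightarrow> U ** cadj U = mat 1 \<and> cadj U ** U = mat 1"

definition psd :: "'n::finite cmat \<Rightarrow> bool" where
  "psd A \<longleftrightarrow> self_adjoint A \<and>
     (\<forall>x::complex^'n. 0 \<le> Re (\<Sum>i\<in>UNIV. cnj (x $ i) * (A *v x) $ i))"

definition loewner_le :: "'n::finite cmat \<Rightarrow> 'n cmat \<Rightarrow> bool" where
  "loewner_le A B \<longleftrightarrow> psd (B - A)"

definition is_eigenvalue :: "'n::finite cmat \<Rightarrow> complex \<Rightarrow> bool" where
  "is_eigenvalue A \<mu> \<longleftrightarrow> (\<exists>v. v \<noteq> 0 \<and> A *v v = \<mu> *s v)"

text \<open>Smallest eigenvalue (meaningful for self-adjoint A, whose eigenvalues are real).\<close>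
definition smallest_eigenvalue :: "'n::finite cmat \<Rightarrow> real" where
  "smallest_eigenvalue A = Min (Re ` {\<mu>. is_eigenvalue A \<mu>})"

definition density_state :: "'n::finite cmat \<Rightarrow> bool" where
  "density_state \<rho> \<longleftrightarrow> psd \<rho> \<and> mtrace \<rho> = 1"

definition lindblad :: "'n::finite cmat \<Rightarrow> (nat \<Rightarrow> 'n cmat) \<Rightarrow> nat \<Rightarrow> 'n cmat \<Rightarrow> 'n cmat" where
  "lindblad H L N \<rho> = - (\<i> *\<^sub>m comm H \<rho>)
     + (\<Sum>k\<in>{1..N}. L k ** \<rho> ** cadj (L k)
          - (1/2) *\<^sub>m (cadj (L k) ** L k ** \<rho>) - (1/2) *\<^sub>m (\<rho> ** cadj (L k) ** L k))"

definition gen :: "'n::finite cmat \<Rightarrow> 'n cmat \<Rightarrow> 'n cmat" where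
  "gen L X = cadj L ** X ** L - (1/2) *\<^sub>m (cadj L ** L ** X) - (1/2) *\<^sub>m (X ** cadj L ** L)"

definition diss :: "'n::finite cmat \<Rightarrow> 'n cmat \<Rightarrow> 'n cmat" where
  "diss L X = comm (cadj L) X ** comm X L"

definition ags_stable :: "'n::finite cmat \<Rightarrow> (nat \<Rightarrow> 'n cmat) \<Rightarrow> nat \<Rightarrow> 'n cmat \<Rightarrow> bool" where
  "ags_stable H L N X \<longleftrightarrow>
     (\<forall>\<rho> :: real \<Rightarrow> 'n cmat.
        density_state (\<rho> 0) \<and>
        (\<forall>t\<ge>0. (\<rho> has_vector_derivative lindblad H L N (\<rho> t)) (at t within {0..}))
        \<longrightarrow> ((\<lambda>t. mtrace (X ** \<rho> t)) \<longlongrightarrow> complex_of_real (smallest_eigenvalue X)) at_top)"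

end

theory Submission
  imports Defs
begin


definition ip :: "complex^'n::finite \<Rightarrow> complex^'n \<Rightarrow> complex" where
  "ip x y = (\<Sum>i\<in>UNIV. cnj (x $ i) * y $ i)"

definition qf :: "'n::finite cmat \<Rightarrow> complex^'n \<Rightarrow> complex" where
  "qf A x = ip x (A *v x)"

definition outer :: "complex^'n::finite \<Rightarrow> 'n cmat" where
  "outer v = (\<chi> i j. v $ i * cnj (v $ j))"

lemma psd_qf: "psd A \<longleftrightarrow> self_adjoint A \<and> (\<forall>x. 0 \<le> Re (qf A x))"
  by (simp add: psd_def qf_def ip_def)

lemma mm_rdistrib: "((A::'n::finite cmat) + B) ** C = A ** C + B ** C"
  by (simp add: matrix_matrix_mult_def vec_eq_iff sum.distrib distrib_right)
lemma mm_ldiff: "(A::'n::finite cmat) ** (B - C) = A ** B - A ** C"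
  by (simp add: matrix_matrix_mult_def vec_eq_iff sum_subtractf right_diff_distrib)
lemma mm_rdiff: "((A::'n::finite cmat) - B) ** C = A ** C - B ** C"
  by (simp add: matrix_matrix_mult_def vec_eq_iff sum_subtractf left_diff_distrib)
lemma mm_lminus: "(- (A::'n::finite cmat)) ** B = - (A ** B)"
  by (simp add: matrix_matrix_mult_def vec_eq_iff sum_negf)
lemma mm_rminus: "(A::'n::finite cmat) ** (- B) = - (A ** B)"
  by (simp add: matrix_matrix_mult_def vec_eq_iff sum_negf)
lemma mm_lsum: "(\<Sum>k\<in>S. (f k::'n::finite cmat)) ** (B::'n::finite cmat) = (\<Sum>k\<in>S. f k ** B)"
  by (induction S rule: infinite_finite_induct) (auto simp: mm_rdistrib)
lemma mm_rsum: "(B::'n::finite cmat) ** (\<Sum>k\<in>S. (f k::'n::finite cmat)) = (\<Sum>k\<in>S. B ** f k)"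
  by (induction S rule: infinite_finite_induct) (auto simp: matrix_add_ldistrib)

lemma mscale_nth[simp]: "(c *\<^sub>m A) $ i $ j = c * A $ i $ j"
  by (simp add: mscale_def)
lemma mscale_add: "c *\<^sub>m ((A::'n::finite cmat) + B) = c *\<^sub>m A + c *\<^sub>m B"
  by (simp add: vec_eq_iff distrib_left)
lemma mscale_diff: "c *\<^sub>m ((A::'n::finite cmat) - B) = c *\<^sub>m A - c *\<^sub>m B"
  by (simp add: vec_eq_iff right_diff_distrib)
lemma mscale_minus: "c *\<^sub>m (- (A::'n::finite cmat)) = - (c *\<^sub>m A)"
  by (simp add: vec_eq_iff)
lemma mscale_uminus: "(- c) *\<^sub>m (A::'n::finite cmat) = - (c *\<^sub>m A)"
  by (simp add: vec_eq_iff)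
lemma mscale_ladd: "(c + d) *\<^sub>m (A::'n::finite cmat) = c *\<^sub>m A + d *\<^sub>m A"
  by (simp add: vec_eq_iff distrib_right)
lemma mscale_ldiff: "(c - d) *\<^sub>m (A::'n::finite cmat) = c *\<^sub>m A - d *\<^sub>m A"
  by (simp add: vec_eq_iff left_diff_distrib)
lemma mscale_mscale: "c *\<^sub>m (d *\<^sub>m (A::'n::finite cmat)) = (c * d) *\<^sub>m A"
  by (simp add: vec_eq_iff)
lemma mscale_one[simp]: "1 *\<^sub>m (A::'n::finite cmat) = A"
  by (simp add: vec_eq_iff)
lemma mscale_zero[simp]: "0 *\<^sub>m (A::'n::finite cmat) = 0" "c *\<^sub>m (0::'n::finite cmat) = 0"
  by (simp_all add: vec_eq_iff)
lemma mscale_mm_left: "(c *\<^sub>m (A::'n::finite cmat)) ** B = c *\<^sub>m (A ** B)"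
  by (simp add: matrix_matrix_mult_def vec_eq_iff sum_distrib_left mult.assoc)
lemma mscale_mm_right: "(A::'n::finite cmat) ** (c *\<^sub>m B) = c *\<^sub>m (A ** B)"
  by (simp add: matrix_matrix_mult_def vec_eq_iff sum_distrib_left algebra_simps)
lemma mscale_real: "complex_of_real r *\<^sub>m (A::'n::finite cmat) = r *\<^sub>R A"
  by (simp add: vec_eq_iff complex_eq_iff)
lemma mscale_sum: "c *\<^sub>m (\<Sum>k\<in>S. f k) = (\<Sum>k\<in>S. c *\<^sub>m (f k :: 'n::finite cmat))"
  by (induction S rule: infinite_finite_induct) (auto simp: mscale_add)

lemma cadj_nth[simp]: "cadj A $ i $ j = cnj (A $ j $ i)"
  by (simp add: cadj_def)
lemma cadj_cadj[simp]: "cadj (cadj A) = A"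
  by (simp add: vec_eq_iff)
lemma cadj_add: "cadj ((A::'n::finite cmat) + B) = cadj A + cadj B"
  by (simp add: vec_eq_iff)
lemma cadj_diff: "cadj ((A::'n::finite cmat) - B) = cadj A - cadj B"
  by (simp add: vec_eq_iff)
lemma cadj_minus: "cadj (- (A::'n::finite cmat)) = - cadj A"
  by (simp add: vec_eq_iff)
lemma cadj_zero[simp]: "cadj (0::'n::finite cmat) = 0"
  by (simp add: vec_eq_iff)
lemma cadj_mat: "cadj (mat 1 :: 'n::finite cmat) = mat 1"
  by (simp add: vec_eq_iff mat_def)
lemma cadj_mscale: "cadj (c *\<^sub>m (A::'n::finite cmat)) = cnj c *\<^sub>m cadj A"
  by (simp add: vec_eq_iff)
lemma cadj_mm: "cadj ((A::'n::finite cmat) ** B) = cadj B ** cadj A"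
  by (simp add: vec_eq_iff matrix_matrix_mult_def mult.commute)
lemma cadj_sum: "cadj (\<Sum>k\<in>S. f k) = (\<Sum>k\<in>S. cadj (f k :: 'n::finite cmat))"
  by (induction S rule: infinite_finite_induct) (auto simp: cadj_add)

lemma mtrace_add: "mtrace ((A::'n::finite cmat) + B) = mtrace A + mtrace B"
  by (simp add: mtrace_def sum.distrib)
lemma mtrace_diff: "mtrace ((A::'n::finite cmat) - B) = mtrace A - mtrace B"
  by (simp add: mtrace_def sum_subtractf)
lemma mtrace_minus: "mtrace (- (A::'n::finite cmat)) = - mtrace A"
  by (simp add: mtrace_def sum_negf)
lemma mtrace_zero[simp]: "mtrace (0::'n::finite cmat) = 0"
  by (simp add: mtrace_def)
lemma mtrace_mscale: "mtrace (c *\<^sub>m (A::'n::finite cmat)) = c * mtrace A"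
  by (simp add: mtrace_def sum_distrib_left)
lemma mtrace_scaleR: "mtrace (r *\<^sub>R (A::'n::finite cmat)) = r *\<^sub>R mtrace A"
  by (simp add: mtrace_def scaleR_sum_right)
lemma mtrace_sum: "mtrace (\<Sum>k\<in>S. f k) = (\<Sum>k\<in>S. mtrace (f k :: 'n::finite cmat))"
  by (induction S rule: infinite_finite_induct) (auto simp: mtrace_add)
lemma mtrace_comm: "mtrace ((A::'n::finite cmat) ** B) = mtrace (B ** A)"
  unfolding mtrace_def matrix_matrix_mult_def
  by (simp, subst sum.swap, simp add: mult.commute)
lemma mtrace_cadj: "mtrace (cadj (A::'n::finite cmat)) = cnj (mtrace A)"
  by (simp add: mtrace_def)

lemma ip_cnj: "cnj (ip x y) = ip y x"
  by (simp add: ip_def mult.commute)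
lemma ip_adj: "ip x ((A::'n::finite cmat) *v y) = ip (cadj A *v x) y"
  unfolding ip_def matrix_vector_mult_def
  by (simp add: sum_distrib_left sum_distrib_right, subst sum.swap, simp add: algebra_simps)
lemma ip_self: "ip x x = complex_of_real (\<Sum>i\<in>UNIV. (cmod (x $ i))\<^sup>2)"
  unfolding ip_def of_real_sum
  by (rule sum.cong) (simp_all add: complex_norm_square[symmetric] mult.commute del: of_real_power)
lemma ip_self_Re: "Re (ip x x) = (norm x)\<^sup>2"
  by (simp add: ip_self norm_vec_def L2_set_def sum_nonneg)

lemma qf_add: "qf ((A::'n::finite cmat) + B) x = qf A x + qf B x"
  by (simp add: qf_def ip_def matrix_vector_mult_add_rdistrib algebra_simps sum.distrib)
lemma qf_diff: "qf ((A::'n::finite cmat) - B) x = qf A x - qf B x"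
  by (simp add: qf_def ip_def matrix_vector_mult_diff_rdistrib algebra_simps sum_subtractf)
lemma qf_minus: "qf (- (A::'n::finite cmat)) x = - qf A x"
  by (simp add: qf_def ip_def matrix_vector_mult_def sum_negf sum_distrib_left)
lemma qf_mscale: "qf (c *\<^sub>m (A::'n::finite cmat)) x = c * qf A x"
  by (simp add: qf_def ip_def matrix_vector_mult_def sum_distrib_left algebra_simps)
lemma qf_zero[simp]: "qf (0::'n::finite cmat) x = 0"
  by (simp add: qf_def ip_def)
lemma qf_sum: "qf (\<Sum>k\<in>S. f k) x = (\<Sum>k\<in>S. qf (f k :: 'n::finite cmat) x)"
  by (induction S rule: infinite_finite_induct) (auto simp: qf_add)
lemma qf_mm: "qf ((A::'n::finite cmat) ** B) x = ip (cadj A *v x) (B *v x)"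
  by (simp add: qf_def ip_adj matrix_vector_mul_assoc[symmetric])
lemma qf_sandwich: "qf (cadj B ** A ** (B::'n::finite cmat)) x = qf A (B *v x)"
  by (simp add: qf_def ip_adj matrix_vector_mul_assoc[symmetric])
lemma qf_mat1: "qf (mat 1) x = ip x x"
  by (simp add: qf_def)

lemma mtrace_outer: "mtrace ((A::'n::finite cmat) ** outer v) = qf A v"
  unfolding mtrace_def qf_def ip_def outer_def matrix_matrix_mult_def matrix_vector_mult_def
  by (simp add: sum_distrib_left mult.commute mult.left_commute)

lemma self_adjoint_cnj_qf: "self_adjoint A \<Longrightarrow> cnj (qf A x) = qf A x"
  by (simp add: self_adjoint_def qf_def ip_cnj ip_adj)
lemma self_adjoint_qf_real: "self_adjoint A \<Longrightarrow> qf A x = complex_of_real (Re (qf A x))"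
  using self_adjoint_cnj_qf[of A x] by (auto simp: complex_eq_iff)



lemma mult_cnj_sq: "z * cnj z = (complex_of_real (cmod z))\<^sup>2" "cnj z * z = (complex_of_real (cmod z))\<^sup>2"
  by (metis complex_norm_square of_real_power, metis complex_norm_square of_real_power mult.commute)

lemma cs_abstract:
  fixes a c :: real and b :: complex
  assumes a: "0 \<le> a" and c: "0 \<le> c"
    and q: "\<And>z::complex. 0 \<le> a + 2 * Re (z * b) + (cmod z)\<^sup>2 * c"
  shows "(cmod b)\<^sup>2 \<le> a * c"
proof (cases "c = 0")
  case True
  show ?thesis
  proof (rule ccontr)
    assume "\<not> ?thesis"
    then have "b \<noteq> 0" using True by auto
    then have bp: "0 < (cmod b)\<^sup>2" by simp
    define z where "z = - complex_of_real ((a + 1) / (cmod b)\<^sup>2) * cnj b"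
    have "z * b = - complex_of_real ((a + 1) / (cmod b)\<^sup>2) * (b * cnj b)"
      by (simp add: z_def algebra_simps)
    also have "\<dots> = - complex_of_real (a + 1)"
      using bp by (simp add: mult_cnj_sq)
    finally have e: "Re (z * b) = - (a + 1)" by simp
    have "0 \<le> a + 2 * Re (z * b)" using q[of z] True by (metis add.right_neutral mult_zero_right)
    with e a show False by linarith
  qed
next
  case False
  then have cp: "0 < c" using c by simp
  define z where "z = - cnj b / complex_of_real c"
  have "z * b = - complex_of_real ((cmod b)\<^sup>2 / c)"
    by (simp add: z_def mult_cnj_sq)
  then have "Re (z * b) = - (cmod b)\<^sup>2 / c" by simp
  moreover have "(cmod z)\<^sup>2 = (cmod b)\<^sup>2 / c\<^sup>2"
    using cp by (simp add: z_def norm_divide power_divide)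
  ultimately have "0 \<le> a - 2 * (cmod b)\<^sup>2 / c + (cmod b)\<^sup>2 / c\<^sup>2 * c"
    using q[of z] by simp
  also have "(cmod b)\<^sup>2 / c\<^sup>2 * c = (cmod b)\<^sup>2 / c"
    using cp by (simp add: power2_eq_square field_simps)
  finally have "(cmod b)\<^sup>2 / c \<le> a" by simp
  then show ?thesis using cp by (simp add: field_simps mult.commute)
qed

lemma ip_add_left: "ip (x + y) z = ip x z + ip y z"
  by (simp add: ip_def algebra_simps sum.distrib)
lemma ip_add_right: "ip z (x + y) = ip z x + ip z y"
  by (simp add: ip_def algebra_simps sum.distrib)
lemma ip_scale_left: "ip (c *s x) y = cnj c * ip x y"
  by (simp add: ip_def sum_distrib_left algebra_simps)
lemma ip_scale_right: "ip x (c *s y) = c * ip x y"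
  by (simp add: ip_def sum_distrib_left algebra_simps)
lemma mv_scale: "(A::'n::finite cmat) *v (c *s x) = c *s (A *v x)"
  by (simp add: matrix_vector_mult_def vec_eq_iff sum_distrib_left algebra_simps)

lemma qf_expand:
  assumes "self_adjoint A"
  shows "qf A (x + z *s y) = qf A x + complex_of_real (2 * Re (z * ip x (A *v y))) + cnj z * z * qf A y"
proof -
  have h: "ip y (A *v x) = cnj (ip x (A *v y))"
    using assms by (simp add: ip_cnj ip_adj self_adjoint_def)
  have e1: "qf A (x + z *s y) = qf A x + (z * ip x (A *v y) + cnj z * ip y (A *v x)) + cnj z * z * qf A y"
    by (simp add: qf_def matrix_vector_right_distrib mv_scale ip_add_left ip_add_right
        ip_scale_left ip_scale_right algebra_simps)
  have e2: "z * ip x (A *v y) + cnj z * ip y (A *v x) = complex_of_real (2 * Re (z * ip x (A *v y)))"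
    by (simp add: h complex_eq_iff)
  show ?thesis unfolding e1 e2 ..
qed

lemma psd_cs:
  assumes "psd A"
  shows "(cmod (ip x (A *v y)))\<^sup>2 \<le> Re (qf A x) * Re (qf A y)"
proof (rule cs_abstract)
  show "0 \<le> Re (qf A x)" "0 \<le> Re (qf A y)" using assms by (auto simp: psd_qf)
  fix z :: complex
  have "0 \<le> Re (qf A (x + z *s y))" using assms by (auto simp: psd_qf)
  also have "Re (qf A (x + z *s y)) = Re (qf A x) + 2 * Re (z * ip x (A *v y)) + (cmod z)\<^sup>2 * Re (qf A y)"
    using assms by (simp add: psd_qf qf_expand complex_norm_square[symmetric] mult.commute
       del: of_real_power)
  finally show "0 \<le> Re (qf A x) + 2 * Re (z * ip x (A *v y)) + (cmod z)\<^sup>2 * Re (qf A y)" .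
qed

lemma ip_zero_iff: "ip x x = 0 \<longleftrightarrow> x = 0"
proof
  assume "ip x x = 0"
  then have "(norm x)\<^sup>2 = 0" using ip_self_Re[of x] by simp
  then show "x = 0" by simp
qed (simp add: ip_def)

lemma psd_kernel:
  assumes "psd A" and "Re (qf A x) = 0"
  shows "A *v x = 0"
proof -
  have "(cmod (ip (A *v x) (A *v x)))\<^sup>2 \<le> Re (qf A (A *v x)) * Re (qf A x)"
    using psd_cs[OF assms(1)] by blast
  then have "ip (A *v x) (A *v x) = 0" using assms(2) by simp
  then show ?thesis by (simp add: ip_zero_iff)
qed

lemma psd_self_adjoint: "psd A \<Longrightarrow> self_adjoint A"
  by (simp add: psd_def)

lemma self_adjoint_add: "self_adjoint A \<Longrightarrow> self_adjoint B \<Longrightarrow> self_adjoint (A + B)"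
  by (simp add: self_adjoint_def cadj_add)
lemma self_adjoint_diff: "self_adjoint A \<Longrightarrow> self_adjoint B \<Longrightarrow> self_adjoint (A - B)"
  by (simp add: self_adjoint_def cadj_diff)
lemma self_adjoint_outer: "self_adjoint (outer v)"
  by (simp add: self_adjoint_def outer_def vec_eq_iff mult.commute)
lemma qf_outer: "qf (outer w) x = complex_of_real ((cmod (ip x w))\<^sup>2)"
proof -
  have "qf (outer w) x = ip x w * cnj (ip x w)"
    unfolding qf_def ip_def outer_def matrix_vector_mult_def
    by (simp add: sum_distrib_left sum_distrib_right algebra_simps) (subst sum.swap, simp add: algebra_simps)
  then show ?thesis by (simp add: mult_cnj_sq)
qed
lemma psd_outer: "psd (outer w)"
  by (simp add: psd_qf self_adjoint_outer qf_outer)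

lemma psd_add: "psd A \<Longrightarrow> psd B \<Longrightarrow> psd (A + B)"
  by (auto simp: psd_qf self_adjoint_add qf_add intro: add_nonneg_nonneg)
lemma psd_zero: "psd (0::'n::finite cmat)"
  by (simp add: psd_qf self_adjoint_def)
lemma psd_sum: "(\<And>k. k \<in> S \<Longrightarrow> psd (f k)) \<Longrightarrow> psd (\<Sum>k\<in>S. (f k :: 'n::finite cmat))"
  by (induction S rule: infinite_finite_induct) (auto simp: psd_zero psd_add)
lemma psd_scale: "psd A \<Longrightarrow> 0 \<le> r \<Longrightarrow> psd (complex_of_real r *\<^sub>m A)"
  by (auto simp: psd_qf self_adjoint_def cadj_mscale qf_mscale)
lemma psd_sandwich: "psd A \<Longrightarrow> psd (cadj B ** A ** B)"
  by (auto simp: psd_qf self_adjoint_def cadj_mm qf_sandwich matrix_mul_assoc)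
lemma psd_mat1: "psd (mat 1 :: 'n::finite cmat)"
  by (simp add: psd_qf self_adjoint_def cadj_mat qf_mat1 ip_self_Re)

section \<open>Decomposition of psd matrices\<close>

lemma mv_axis: "((A::'n::finite cmat) *v axis a 1) $ i = A $ i $ a"
  by (simp add: matrix_vector_mult_def axis_def if_distrib if_distribR cong: if_cong)
lemma ip_axis: "ip (axis a 1) y = y $ a"
  by (simp add: ip_def axis_def if_distrib if_distribR cong: if_cong)


lemma psd_decomp_aux:
  fixes S :: "'n::finite set"
  shows "\<forall>\<rho>::'n cmat. psd \<rho> \<and> (\<forall>i j. i \<notin> S \<or> j \<notin> S \<longrightarrow> \<rho> $ i $ j = 0)
     \<longrightarrow> (\<exists>v. \<rho> = (\<Sum>k\<in>S. outer (v k)))"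
proof (induction S rule: finite_induct[OF finite])
  case 1
  then show ?case by (auto simp: vec_eq_iff)
next
  case (2 a S)
  show ?case
  proof (intro allI impI)
    fix \<rho> :: "'n cmat"
    assume A: "psd \<rho> \<and> (\<forall>i j. i \<notin> insert a S \<or> j \<notin> insert a S \<longrightarrow> \<rho> $ i $ j = 0)"
    then have ps: "psd \<rho>" and supp: "\<And>i j. i \<notin> insert a S \<or> j \<notin> insert a S \<Longrightarrow> \<rho> $ i $ j = 0"
      by auto
    have ca: "cadj \<rho> = \<rho>" using ps by (simp add: psd_def self_adjoint_def)
    have sa: "\<rho> $ i $ j = cnj (\<rho> $ j $ i)" for i j
    proof -
      have "cadj \<rho> $ i $ j = \<rho> $ i $ j" using ca by simp
      then show ?thesis by simp
    qed
    define e :: "complex^'n" where "e = axis a 1"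
    have rhoe: "\<And>i. (\<rho> *v e) $ i = \<rho> $ i $ a"
      by (simp add: e_def mv_axis)
    have qe: "qf \<rho> e = \<rho> $ a $ a"
      by (simp add: e_def qf_def ip_axis mv_axis)
    define r where "r = Re (\<rho> $ a $ a)"
    have "0 \<le> Re (qf \<rho> e)" using ps by (simp add: psd_qf)
    then have r0: "0 \<le> r" using qe by (simp add: r_def)
    have raa: "\<rho> $ a $ a = complex_of_real r"
      using self_adjoint_qf_real[OF psd_self_adjoint[OF ps], of e] qe by (simp add: r_def)
    show "\<exists>v. \<rho> = (\<Sum>k\<in>insert a S. outer (v k))"
    proof (cases "r = 0")
      case True
      then have "\<rho> *v e = 0" using psd_kernel[OF ps, of e] qe by (simp add: r_def)
      then have col: "\<And>i. \<rho> $ i $ a = 0" using rhoe by (metis zero_index)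
      have "\<rho> $ i $ j = 0" if "i \<notin> S \<or> j \<notin> S" for i j
      proof (cases "i = a")
        case True
        then show ?thesis using sa[of a j] col[of j] by simp
      next
        case False
        show ?thesis
        proof (cases "j = a")
          case True then show ?thesis using col by simp
        next
          case False
          then show ?thesis using \<open>i \<noteq> a\<close> that supp by auto
        qed
      qed
      then have "psd \<rho> \<and> (\<forall>i j. i \<notin> S \<or> j \<notin> S \<longrightarrow> \<rho> $ i $ j = 0)"
        using ps by blast
      then obtain v where v: "\<rho> = (\<Sum>k\<in>S. outer (v k))" using 2 by blast
      have "outer (0::complex^'n) = 0" by (simp add: outer_def vec_eq_iff)
      then have "\<rho> = (\<Sum>k\<in>insert a S. outer ((v(a := 0)) k))"
        using v 2 by (simp add: sum.insert) (rule sum.cong, auto)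
      then show ?thesis by blast
    next
      case False
      then have rp: "0 < r" using r0 by simp
      define w :: "complex^'n" where "w = complex_of_real (1 / sqrt r) *s (\<rho> *v e)"
      have wi: "\<And>i. w $ i = \<rho> $ i $ a / complex_of_real (sqrt r)"
        by (simp add: w_def rhoe divide_inverse mult.commute)
      have ow: "\<And>i j. outer w $ i $ j = \<rho> $ i $ a * \<rho> $ a $ j / complex_of_real r"
      proof -
        fix i j
        have "outer w $ i $ j = \<rho> $ i $ a * cnj (\<rho> $ j $ a) / (complex_of_real (sqrt r) * complex_of_real (sqrt r))"
          by (simp add: outer_def wi)
        also have "complex_of_real (sqrt r) * complex_of_real (sqrt r) = complex_of_real r"
          using r0 by (simp flip: of_real_mult)
        finally show "outer w $ i $ j = \<rho> $ i $ a * \<rho> $ a $ j / complex_of_real r"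
          using sa[of a j] by simp
      qed
      define \<rho>' where "\<rho>' = \<rho> - outer w"
      have ps': "psd \<rho>'"
        unfolding psd_qf
      proof (intro conjI allI)
        show "self_adjoint \<rho>'" unfolding \<rho>'_def
          by (rule self_adjoint_diff[OF psd_self_adjoint[OF ps] self_adjoint_outer])
        fix x
        have "ip x w = complex_of_real (1 / sqrt r) * ip x (\<rho> *v e)"
          by (simp add: w_def ip_scale_right)
        then have "(cmod (ip x w))\<^sup>2 = (cmod (ip x (\<rho> *v e)))\<^sup>2 / r"
          using r0 by (simp add: norm_divide power_divide)
        also have "\<dots> \<le> Re (qf \<rho> x) * Re (qf \<rho> e) / r"
          using psd_cs[OF ps, of x e] rp by (simp add: divide_right_mono)
        also have "\<dots> = Re (qf \<rho> x)" using qe rp by (simp add: r_def)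
        finally show "0 \<le> Re (qf \<rho>' x)"
          by (simp add: \<rho>'_def qf_diff qf_outer)
      qed
      have supp': "\<forall>i j. i \<notin> S \<or> j \<notin> S \<longrightarrow> \<rho>' $ i $ j = 0"
      proof (intro allI impI)
        fix i j assume ij: "i \<notin> S \<or> j \<notin> S"
        show "\<rho>' $ i $ j = 0"
        proof (cases "i = a \<or> j = a")
          case True
          then show ?thesis using rp raa
            by (auto simp: \<rho>'_def ow)
        next
          case False
          then have "i \<notin> insert a S \<or> j \<notin> insert a S" using ij by auto
          then have "\<rho> $ i $ j = 0" "\<rho> $ i $ a = 0 \<or> \<rho> $ a $ j = 0" using supp by auto
          then show ?thesis by (auto simp: \<rho>'_def ow)
        qed
      qed
      obtain v where v: "\<rho>' = (\<Sum>k\<in>S. outer (v k))" using 2 ps' supp' by blast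
      have "\<rho> = outer w + \<rho>'" by (simp add: \<rho>'_def)
      also have "\<dots> = (\<Sum>k\<in>insert a S. outer ((v(a := w)) k))"
        using v 2 by (simp add: sum.insert) (rule sum.cong, auto)
      finally show ?thesis by blast
    qed
  qed
qed

lemma psd_decomp:
  assumes "psd (\<rho>::'n::finite cmat)"
  obtains v :: "'n \<Rightarrow> complex^'n" where "\<rho> = (\<Sum>k\<in>UNIV. outer (v k))"
proof -
  have "\<exists>v :: 'n \<Rightarrow> complex^'n. \<rho> = (\<Sum>k\<in>UNIV. outer (v k))"
  proof -
    have "\<forall>\<rho>::'n cmat. psd \<rho> \<longrightarrow> (\<exists>v :: 'n \<Rightarrow> complex^'n. \<rho> = (\<Sum>k\<in>UNIV. outer (v k)))"
      using psd_decomp_aux[of UNIV] by simp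
    then show ?thesis using assms by blast
  qed
  then show thesis using that by blast
qed

lemma qf_real_Im: "psd A \<Longrightarrow> Im (qf A y) = 0"
proof -
  assume "psd A"
  then have h: "qf A y = complex_of_real (Re (qf A y))"
    using self_adjoint_qf_real psd_self_adjoint by blast
  have "Im (qf A y) = Im (complex_of_real (Re (qf A y)))" by (subst h, rule refl)
  then show ?thesis by simp
qed

lemma trace_outer_sum: "mtrace (A ** (\<Sum>k\<in>S. outer (v k))) = (\<Sum>k\<in>S. qf A (v k))"
  by (simp only: mm_rsum mtrace_sum mtrace_outer)

lemma trace_psd:
  fixes A \<rho> :: "'n::finite cmat"
  assumes "psd A" "psd \<rho>"
  shows "0 \<le> Re (mtrace (A ** \<rho>))" "Im (mtrace (A ** \<rho>)) = 0"
proof -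
  obtain v :: "'n \<Rightarrow> complex^'n" where v: "\<rho> = (\<Sum>k\<in>UNIV. outer (v k))"
    by (rule psd_decomp[OF assms(2)])
  have eq: "mtrace (A ** \<rho>) = (\<Sum>k\<in>UNIV. qf A (v k))"
    unfolding v by (rule trace_outer_sum)
  have "0 \<le> Re (qf A x)" for x using assms(1) by (simp add: psd_qf)
  then show "0 \<le> Re (mtrace (A ** \<rho>))" 
    unfolding eq Re_sum by (intro sum_nonneg) 
  show "Im (mtrace (A ** \<rho>)) = 0" 
    unfolding eq Im_sum using qf_real_Im[OF assms(1)] by simp
qed



lemma interior_ge0: "0 < (t::real) \<Longrightarrow> t \<in> interior {0..}"
proof -
  have "{0<..} \<subseteq> {0::real..}" by auto
  then have "interior {0<..} \<subseteq> interior {0::real..}" by (rule interior_mono)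
  then show "0 < t \<Longrightarrow> t \<in> interior {0..}" by (auto simp: interior_open)
qed

lemma at_within_ge0: "0 < (t::real) \<Longrightarrow> at t within {0..} = at t"
  by (rule at_within_interior[OF interior_ge0])

lemma dec_within:
  fixes f f' :: "real \<Rightarrow> real"
  assumes d: "\<And>t. 0 \<le> t \<Longrightarrow> (f has_real_derivative f' t) (at t within {0..})"
    and n: "\<And>t. 0 \<le> t \<Longrightarrow> f' t \<le> 0" and ab: "0 \<le> a" "a \<le> b"
  shows "f b \<le> f a"
proof -
  have c: "continuous_on {0..} f"
    unfolding continuous_on_eq_continuous_within
  proof
    fix t :: real assume "t \<in> {0..}"
    then have "0 \<le> t" by simp
    then show "continuous (at t within {0..}) f" by (rule DERIV_continuous[OF d])
  qed
  show ?thesis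
  proof (rule DERIV_nonpos_imp_decreasing_open[OF ab(2)])
    fix x assume "a < x" "x < b"
    then have x0: "0 < x" using ab by simp
    then have e: "at x within {0..} = at x" by (rule at_within_ge0)
    have "(f has_real_derivative f' x) (at x within {0..})" using x0 d by simp
    then have "(f has_real_derivative f' x) (at x)" unfolding e .
    then show "\<exists>y. (f has_real_derivative y) (at x) \<and> y \<le> 0"
      using n[of x] x0 by auto
  next
    have "{a..b} \<subseteq> {0..}" using ab by auto
    then show "continuous_on {a..b} f" using c by (rule continuous_on_subset[rotated])
  qed
qed

lemma inc_within:
  fixes f f' :: "real \<Rightarrow> real"
  assumes d: "\<And>t. 0 \<le> t \<Longrightarrow> (f has_real_derivative f' t) (at t within {0..})"
    and n: "\<And>t. 0 \<le> t \<Longrightarrow> 0 \<le> f' t" and ab: "0 \<le> a" "a \<le> b"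
  shows "f a \<le> f b"
proof -
  have "(\<lambda>t. - f t) b \<le> (\<lambda>t. - f t) a"
  proof (rule dec_within[of "\<lambda>t. - f t" "\<lambda>t. - f' t"])
    show "\<And>t. 0 \<le> t \<Longrightarrow> ((\<lambda>t. - f t) has_real_derivative - f' t) (at t within {0..})"
      by (rule DERIV_minus[OF d])
  qed (use n ab in auto)
  then show ?thesis by simp
qed

lemma ode_unique_zero:
  fixes F :: "'a::euclidean_space \<Rightarrow> 'a" and x :: "real \<Rightarrow> 'a"
  assumes F: "bounded_linear F"
    and d: "\<And>t. 0 \<le> t \<Longrightarrow> (x has_vector_derivative F (x t)) (at t within {0..})"
    and x0: "x 0 = 0" and t: "0 \<le> t"
  shows "x t = 0"
proof -
  obtain K where K: "0 < K" "\<And>y. norm (F y) \<le> norm y * K"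
    using bounded_linear.pos_bounded[OF F] by blast
  define u where "u t = exp (- 2 * K * t) * (x t \<bullet> x t)" for t
  define u' where "u' t = exp (- 2 * K * t) * (- 2 * K) * (x t \<bullet> x t)
     + exp (- 2 * K * t) * (x t \<bullet> F (x t) + F (x t) \<bullet> x t)" for t
  have du: "(u has_real_derivative u' t) (at t within {0..})" if "0 \<le> t" for t
  proof -
    have "((\<lambda>t. x t \<bullet> x t) has_vector_derivative (x t \<bullet> F (x t) + F (x t) \<bullet> x t)) (at t within {0..})"
      by (rule bounded_bilinear.has_vector_derivative[OF bounded_bilinear_inner d[OF that] d[OF that]])
    then have i: "((\<lambda>t. x t \<bullet> x t) has_real_derivative (x t \<bullet> F (x t) + F (x t) \<bullet> x t)) (at t within {0..})"
      by (simp add: has_real_derivative_iff_has_vector_derivative)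
    have e: "((\<lambda>t. exp (- 2 * K * t)) has_real_derivative exp (- 2 * K * t) * (- 2 * K)) (at t within {0..})"
      by (rule has_field_derivative_at_within[OF DERIV_cong[OF DERIV_fun_exp[OF DERIV_cmult[OF DERIV_ident]]]]) simp
    show ?thesis unfolding u_def u'_def
      by (rule DERIV_cong[OF DERIV_mult[OF e i]]) (simp add: algebra_simps)
  qed
  have nu: "u' t \<le> 0" for t
  proof -
    have "x t \<bullet> F (x t) \<le> norm (x t) * norm (F (x t))" by (rule norm_cauchy_schwarz)
    also have "\<dots> \<le> norm (x t) * (norm (x t) * K)" using K by (simp add: mult_left_mono)
    finally have "x t \<bullet> F (x t) + F (x t) \<bullet> x t \<le> 2 * K * (x t \<bullet> x t)"
      by (simp add: inner_commute power2_norm_eq_inner[symmetric] power2_eq_square algebra_simps)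
    moreover have "u' t = exp (- 2 * K * t) * ((x t \<bullet> F (x t) + F (x t) \<bullet> x t) - 2 * K * (x t \<bullet> x t))"
      by (simp add: u'_def algebra_simps)
    ultimately show ?thesis by (simp add: mult_nonneg_nonpos)
  qed
  have "u t \<le> u 0" by (rule dec_within[OF du nu _ t]) auto
  then have "u t \<le> 0" by (simp add: u_def x0)
  then have "x t \<bullet> x t \<le> 0" unfolding u_def by (simp add: mult_le_0_iff)
  then have "x t \<bullet> x t = 0" using inner_ge_zero[of "x t"] by linarith
  then show ?thesis by simp
qed



section \<open>Structure of the Lindblad generator\<close>

definition lterm :: "'n::finite cmat \<Rightarrow> 'n cmat \<Rightarrow> 'n cmat" where
  "lterm L A = L ** A ** cadj L - (1/2) *\<^sub>m (cadj L ** L ** A) - (1/2) *\<^sub>m (A ** cadj L ** L)"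

lemma lindblad_lterm:
  "lindblad H L N A = - (\<i> *\<^sub>m comm H A) + (\<Sum>k\<in>{1..N}. lterm (L k) A)"
  by (simp add: lindblad_def lterm_def)

lemma mm_scaleR_left: "(r *\<^sub>R (A::'n::finite cmat)) ** (B::'n cmat) = r *\<^sub>R (A ** B)"
  by (simp add: mscale_real[symmetric] mscale_mm_left)
lemma mm_scaleR_right: "(A::'n::finite cmat) ** (r *\<^sub>R (B::'n cmat)) = r *\<^sub>R (A ** B)"
  by (simp add: mscale_real[symmetric] mscale_mm_right)
lemma mscale_scaleR: "c *\<^sub>m (r *\<^sub>R (A::'n::finite cmat)) = r *\<^sub>R (c *\<^sub>m A)"
  by (simp add: mscale_real[symmetric] mscale_mscale mult.commute)
lemma cadj_scaleR: "cadj (r *\<^sub>R (A::'n::finite cmat)) = r *\<^sub>R cadj A"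
  by (simp add: mscale_real[symmetric] cadj_mscale)

lemma comm_add: "comm H ((A::'n::finite cmat) + B) = comm H A + comm H B"
  by (simp add: comm_def matrix_add_ldistrib mm_rdistrib algebra_simps)
lemma comm_scaleR: "comm H (r *\<^sub>R (A::'n::finite cmat)) = r *\<^sub>R comm H A"
  by (simp add: comm_def mm_scaleR_left mm_scaleR_right algebra_simps)

lemma lterm_add: "lterm L ((A::'n::finite cmat) + B) = lterm L A + lterm L B"
  by (simp add: lterm_def matrix_add_ldistrib mm_rdistrib mscale_add algebra_simps)
lemma lterm_scaleR: "lterm L (r *\<^sub>R (A::'n::finite cmat)) = r *\<^sub>R lterm L A"
  by (simp add: lterm_def mm_scaleR_left mm_scaleR_right mscale_scaleR algebra_simps)

lemma lindblad_add: "lindblad H L N ((A::'n::finite cmat) + B) = lindblad H L N A + lindblad H L N B"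
  by (simp add: lindblad_lterm comm_add lterm_add mscale_add sum.distrib algebra_simps)
lemma lindblad_scaleR: "lindblad H L N (r *\<^sub>R (A::'n::finite cmat)) = r *\<^sub>R lindblad H L N A"
  by (simp add: lindblad_lterm comm_scaleR lterm_scaleR mscale_scaleR scaleR_sum_right algebra_simps)

lemma lindblad_linear: "linear (lindblad H L N)"
  by (rule linearI) (simp_all add: lindblad_add lindblad_scaleR)
lemma lindblad_bounded_linear: "bounded_linear (lindblad H L N)"
  using lindblad_linear linear_conv_bounded_linear by blast
lemma lindblad_diff: "lindblad H L N ((A::'n::finite cmat) - B) = lindblad H L N A - lindblad H L N B"
  using linear_diff[OF lindblad_linear] by blast

lemma cadj_linear: "linear (cadj :: 'n::finite cmat \<Rightarrow> 'n cmat)"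
  by (rule linearI) (simp_all add: cadj_add cadj_scaleR)
lemma cadj_bounded_linear: "bounded_linear (cadj :: 'n::finite cmat \<Rightarrow> 'n cmat)"
  using cadj_linear linear_conv_bounded_linear by blast

lemma cadj_comm: "cadj (comm A B) = comm (cadj B) (cadj (A::'n::finite cmat))"
  by (simp add: comm_def cadj_diff cadj_mm)

lemma cadj_lterm: "cadj (lterm L A) = lterm L (cadj (A::'n::finite cmat))"
  by (simp add: lterm_def cadj_diff cadj_mm cadj_mscale matrix_mul_assoc)

lemma cadj_lindblad:
  assumes "self_adjoint H"
  shows "cadj (lindblad H L N A) = lindblad H L N (cadj (A::'n::finite cmat))"
proof -
  have hh: "cadj H = H" using assms by (simp add: self_adjoint_def)
  have sw: "comm (cadj A) H = - comm H (cadj A)" by (simp add: comm_def)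
  have "cadj (- (\<i> *\<^sub>m comm H A)) = - (cnj \<i> *\<^sub>m comm (cadj A) (cadj H))"
    by (simp add: cadj_minus cadj_mscale cadj_comm)
  also have "\<dots> = - (\<i> *\<^sub>m comm H (cadj A))"
    by (simp add: hh sw mscale_minus mscale_uminus)
  finally have "cadj (- (\<i> *\<^sub>m comm H A)) = - (\<i> *\<^sub>m comm H (cadj A))" .
  then show ?thesis
    by (simp only: lindblad_lterm cadj_add cadj_sum cadj_lterm)
qed

lemma trace_lterm: "mtrace (M ** lterm L A) = mtrace (gen L M ** (A::'n::finite cmat))"
proof -
  have t1: "mtrace (M ** (L ** A ** cadj L)) = mtrace (cadj L ** M ** L ** A)"
  proof -
    have "mtrace (M ** (L ** A ** cadj L)) = mtrace ((M ** L ** A) ** cadj L)"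
      by (simp add: matrix_mul_assoc)
    also have "\<dots> = mtrace (cadj L ** (M ** L ** A))" by (rule mtrace_comm)
    finally show ?thesis by (simp add: matrix_mul_assoc)
  qed
  have t2: "mtrace (M ** (A ** cadj L ** L)) = mtrace (cadj L ** L ** M ** A)"
  proof -
    have "mtrace (M ** (A ** cadj L ** L)) = mtrace ((M ** A) ** (cadj L ** L))"
      by (simp add: matrix_mul_assoc)
    also have "\<dots> = mtrace ((cadj L ** L) ** (M ** A))" by (rule mtrace_comm)
    finally show ?thesis by (simp add: matrix_mul_assoc)
  qed
  have t3: "mtrace (M ** (cadj L ** L ** A)) = mtrace (M ** cadj L ** L ** A)"
    by (simp add: matrix_mul_assoc)
  show ?thesis
    unfolding lterm_def gen_def
    by (simp add: mm_ldiff mm_rdiff mscale_mm_left mscale_mm_right mtrace_diff mtrace_mscale t1 t2 t3)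
qed

lemma trace_lindblad_heis:
  "mtrace (M ** lindblad H L N A)
     = mtrace ((\<i> *\<^sub>m comm H M + (\<Sum>k\<in>{1..N}. gen (L k) M)) ** (A::'n::finite cmat))"
proof -
  have h: "mtrace (M ** (- (\<i> *\<^sub>m comm H A))) = mtrace ((\<i> *\<^sub>m comm H M) ** A)"
  proof -
    have a: "mtrace (M ** A ** H) = mtrace (H ** M ** A)"
    proof -
      have "mtrace ((M ** A) ** H) = mtrace (H ** (M ** A))" by (rule mtrace_comm)
      then show ?thesis by (simp add: matrix_mul_assoc)
    qed
    show ?thesis
      by (simp add: comm_def mm_rminus mm_ldiff mm_rdiff mscale_mm_left mscale_mm_right mtrace_minus
          mtrace_diff mtrace_mscale a matrix_mul_assoc algebra_simps)
  qed
  show ?thesis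
    by (simp only: lindblad_lterm matrix_add_ldistrib mm_rdistrib mm_rsum mm_lsum mtrace_add
        mtrace_sum trace_lterm h)
qed

lemma comm_mat1: "comm H (mat 1) = 0"
  by (simp add: comm_def)
lemma gen_mat1: "gen L (mat 1) = (0::'n::finite cmat)"
  by (simp add: gen_def vec_eq_iff)

lemma trace_lindblad: "mtrace (lindblad H L N (A::'n::finite cmat)) = 0"
  using trace_lindblad_heis[of "mat 1" H L N A] by (simp add: comm_mat1 gen_mat1)



lemma qf_scaleR_mat: "qf (r *\<^sub>R (M::'n::finite cmat)) x = complex_of_real r * qf M x"
  by (simp add: mscale_real[symmetric] qf_mscale)

lemma vsc: "(r *\<^sub>R (x::complex^'n::finite)) $ i = complex_of_real r * x $ i"
  by (simp add: complex_eq_iff)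

lemma qf_scaleR_vec: "qf (M::'n::finite cmat) (r *\<^sub>R x) = complex_of_real (r\<^sup>2) * qf M x"
  unfolding qf_def ip_def matrix_vector_mult_def vsc
  by (simp add: sum_distrib_left power2_eq_square algebra_simps)

lemma qf_Re_linear: "linear (\<lambda>M::'n::finite cmat. Re (qf M x))"
  by (rule linearI) (simp_all add: qf_add qf_scaleR_mat)

lemma qf_Re_bounded_linear: "bounded_linear (\<lambda>M::'n::finite cmat. Re (qf M x))"
  using qf_Re_linear linear_conv_bounded_linear by blast

lemma qf_tendsto:
  fixes Mf :: "'a \<Rightarrow> 'n::finite cmat"
  assumes "(Mf \<longlongrightarrow> M) F" "(xf \<longlongrightarrow> x) F"
  shows "((\<lambda>n. qf (Mf n) (xf n)) \<longlongrightarrow> qf M x) F"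
  unfolding qf_def ip_def matrix_vector_mult_def
  by (simp, intro tendsto_intros tendsto_vec_nth assms)

lemma ip_bound: "cmod (ip x y) \<le> norm x * norm (y::complex^'n::finite)"
proof -
  have "(cmod (ip x (mat 1 *v y)))\<^sup>2 \<le> Re (qf (mat 1) x) * Re (qf (mat 1) y)"
    by (rule psd_cs[OF psd_mat1])
  then have "(cmod (ip x y))\<^sup>2 \<le> (norm x * norm y)\<^sup>2"
    by (simp add: qf_mat1 ip_self_Re power_mult_distrib)
  then show ?thesis by (rule power2_le_imp_le) simp
qed

lemma mv_bound: "\<exists>K. \<forall>x. norm ((M::'n::finite cmat) *v x) \<le> K * norm x"
proof -
  have "bounded_linear (\<lambda>x. M *v x)"
    using matrix_vector_mul_linear linear_conv_bounded_linear by blast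
  then obtain K where "\<And>x. norm (M *v x) \<le> norm x * K"
    using bounded_linear.bounded by blast
  then show ?thesis by (metis mult.commute)
qed

lemma qf_bound: "\<exists>C. \<forall>x. Re (qf (M::'n::finite cmat) x) \<le> C * (norm x)\<^sup>2"
proof -
  obtain K where K: "\<And>x. norm (M *v x) \<le> K * norm x" using mv_bound by blast
  have "Re (qf M x) \<le> \<bar>K\<bar> * (norm x)\<^sup>2" for x
  proof -
    have "Re (qf M x) \<le> cmod (qf M x)" by (rule complex_Re_le_cmod)
    also have "\<dots> \<le> norm x * norm (M *v x)" unfolding qf_def by (rule ip_bound)
    also have "\<dots> \<le> norm x * (\<bar>K\<bar> * norm x)"
    proof (rule mult_left_mono)
      have "K * norm x \<le> \<bar>K\<bar> * norm x" by (rule mult_right_mono) auto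
      then show "norm (M *v x) \<le> \<bar>K\<bar> * norm x" using K[of x] by linarith
    qed simp
    finally show ?thesis by (simp add: power2_eq_square algebra_simps)
  qed
  then show ?thesis by blast
qed

definition traj :: "'n::finite cmat \<Rightarrow> (nat \<Rightarrow> 'n cmat) \<Rightarrow> nat \<Rightarrow> (real \<Rightarrow> 'n cmat) \<Rightarrow> bool" where
  "traj H L N \<rho> \<longleftrightarrow> (\<forall>t\<ge>0. (\<rho> has_vector_derivative lindblad H L N (\<rho> t)) (at t within {0..}))"

lemma traj_D: "traj H L N \<rho> \<Longrightarrow> 0 \<le> t \<Longrightarrow> (\<rho> has_vector_derivative lindblad H L N (\<rho> t)) (at t within {0..})"
  by (simp add: traj_def)

lemma traj_cont: "traj H L N \<rho> \<Longrightarrow> continuous_on {0..} \<rho>"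
  unfolding continuous_on_eq_continuous_within
  by (auto intro: has_vector_derivative_continuous traj_D)

lemma traj_self_adjoint:
  assumes H: "self_adjoint H" and tr: "traj H L N \<rho>" and s0: "self_adjoint (\<rho> 0)" and t: "0 \<le> t"
  shows "self_adjoint (\<rho> t)"
proof -
  define x where "x t = \<rho> t - cadj (\<rho> t)" for t
  have "x t = 0"
  proof (rule ode_unique_zero[OF lindblad_bounded_linear _ _ t])
    fix t :: real assume t: "0 \<le> t"
    have "((\<lambda>t. cadj (\<rho> t)) has_vector_derivative cadj (lindblad H L N (\<rho> t))) (at t within {0..})"
      by (rule bounded_linear.has_vector_derivative[OF cadj_bounded_linear traj_D[OF tr t]])
    from has_vector_derivative_diff[OF traj_D[OF tr t] this]
    show "(x has_vector_derivative lindblad H L N (x t)) (at t within {0..})"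
      unfolding x_def by (simp add: lindblad_diff cadj_lindblad[OF H])
  next
    show "x 0 = 0" using s0 by (simp add: x_def self_adjoint_def)
  qed
  then show ?thesis by (simp add: x_def self_adjoint_def)
qed

lemma mtrace_linear: "linear (mtrace :: 'n::finite cmat \<Rightarrow> complex)"
  by (rule linearI) (simp_all add: mtrace_add mtrace_scaleR)
lemma mtrace_bounded_linear: "bounded_linear (mtrace :: 'n::finite cmat \<Rightarrow> complex)"
  using mtrace_linear linear_conv_bounded_linear by blast

lemma traj_trace:
  assumes tr: "traj H L N \<rho>" and t: "0 \<le> t"
  shows "mtrace (\<rho> t) = mtrace (\<rho> 0)"
proof -
  define x where "x t = mtrace (\<rho> t) - mtrace (\<rho> 0)" for t
  have "x t = 0"
  proof (rule ode_unique_zero[where F = "\<lambda>_. 0", OF bounded_linear_zero _ _ t])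
    fix t :: real assume t: "0 \<le> t"
    have "((\<lambda>t. mtrace (\<rho> t)) has_vector_derivative mtrace (lindblad H L N (\<rho> t))) (at t within {0..})"
      by (rule bounded_linear.has_vector_derivative[OF mtrace_bounded_linear traj_D[OF tr t]])
    then show "(x has_vector_derivative 0) (at t within {0..})"
      unfolding x_def by (simp add: trace_lindblad has_vector_derivative_diff_const)
  qed (simp add: x_def)
  then show ?thesis by (simp add: x_def)
qed



section \<open>Positivity preservation\<close>

lemma ip_zero_right[simp]: "ip x 0 = 0"
  by (simp add: ip_def)
lemma ip_zero_left[simp]: "ip 0 x = 0"
  by (simp add: ip_def)

lemma nagumo_key:
  fixes S :: "'n::finite cmat"
  assumes S: "psd S" and y: "S *v y = 0"
  shows "0 \<le> Re (qf (lindblad H L N S) y)"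
proof -
  have cS: "cadj S = S" using S by (simp add: psd_def self_adjoint_def)
  have ha: "qf (H ** S) y = 0" by (simp add: qf_mm y)
  have hb: "qf (S ** H) y = 0" by (simp add: qf_mm cS y)
  have h0: "qf (- (\<i> *\<^sub>m comm H S)) y = 0"
    by (simp add: qf_minus qf_mscale comm_def qf_diff ha hb)
  have lt: "0 \<le> Re (qf (lterm M S) y)" for M
  proof -
    have a1: "qf (cadj M ** M ** S) y = 0" by (simp add: qf_mm y)
    have a2: "qf (S ** cadj M ** M) y = 0"
    proof -
      have "qf (S ** cadj M ** M) y = qf (S ** (cadj M ** M)) y" by (simp add: matrix_mul_assoc)
      also have "\<dots> = 0" by (simp add: qf_mm cS y)
      finally show ?thesis .
    qed
    have a3: "qf (M ** S ** cadj M) y = qf S (cadj M *v y)"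
      using qf_sandwich[of "cadj M" S y] by simp
    show ?thesis
      using S by (simp add: lterm_def qf_diff qf_mscale a1 a2 a3 psd_qf)
  qed
  have "qf (lindblad H L N S) y = qf (- (\<i> *\<^sub>m comm H S)) y + (\<Sum>k\<in>{1..N}. qf (lterm (L k) S) y)"
    unfolding lindblad_lterm qf_add qf_sum ..
  then show ?thesis using h0 lt by (simp add: Re_sum sum_nonneg)
qed

lemma Re_qf_scaleR_vec: "Re (qf (M::'n::finite cmat) (r *\<^sub>R x)) = r\<^sup>2 * Re (qf M x)"
  by (simp add: qf_scaleR_vec)

lemma psd_shift:
  assumes "self_adjoint A" "\<And>x. 0 \<le> Re (qf A x) + c * (norm x)\<^sup>2"
  shows "psd (A + c *\<^sub>R mat 1)"
  unfolding psd_qf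
proof
  show "self_adjoint (A + c *\<^sub>R mat 1)"
    using assms(1) by (simp add: self_adjoint_def cadj_add cadj_scaleR cadj_mat)
  show "\<forall>x. 0 \<le> Re (qf (A + c *\<^sub>R mat 1) x)"
    using assms(2) by (simp add: qf_add qf_scaleR_mat qf_mat1 ip_self_Re)
qed

theorem traj_psd:
  fixes \<rho> :: "real \<Rightarrow> 'n::finite cmat"
  assumes H: "self_adjoint H" and tr: "traj H L N \<rho>" and p0: "psd (\<rho> 0)" and t: "0 \<le> t"
  shows "psd (\<rho> t)"
proof -
  have sa: "\<And>t. 0 \<le> t \<Longrightarrow> self_adjoint (\<rho> t)"
    using traj_self_adjoint[OF H tr psd_self_adjoint[OF p0]] by blast
  obtain C where C: "\<And>x. Re (qf (lindblad H L N (mat 1)) x) \<le> C * (norm x)\<^sup>2"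
    using qf_bound by blast
  define a where "a = \<bar>C\<bar> + 1"
  have cont: "continuous_on {0..} \<rho>" by (rule traj_cont[OF tr])
  have PD: "0 < Re (qf (\<rho> t) x) + \<epsilon> * exp (a * t) * (norm x)\<^sup>2"
    if eps: "0 < \<epsilon>" and t: "0 \<le> t" and x: "x \<noteq> 0" for \<epsilon> t x
  proof -
    define q where "q t x = Re (qf (\<rho> t) x) + \<epsilon> * exp (a * t) * (norm x)\<^sup>2" for t x
    define q' where "q' t x = Re (qf (lindblad H L N (\<rho> t)) x) + \<epsilon> * (exp (a * t) * a) * (norm x)\<^sup>2" for t x
    have dq: "((\<lambda>t. q t x) has_real_derivative q' t x) (at t within {0..})" if "0 \<le> t" for t x
    proof -
      have d1: "((\<lambda>t. Re (qf (\<rho> t) x)) has_real_derivative Re (qf (lindblad H L N (\<rho> t)) x)) (at t within {0..})"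
        using bounded_linear.has_vector_derivative[OF qf_Re_bounded_linear traj_D[OF tr that]]
        by (simp add: has_real_derivative_iff_has_vector_derivative)
      have e: "((\<lambda>t. exp (a * t)) has_real_derivative exp (a * t) * a) (at t)"
        by (rule DERIV_cong[OF DERIV_fun_exp[OF DERIV_cmult[OF DERIV_ident]]]) simp
      have d2: "((\<lambda>t. \<epsilon> * exp (a * t) * (norm x)\<^sup>2) has_real_derivative \<epsilon> * (exp (a * t) * a) * (norm x)\<^sup>2) (at t within {0..})"
        by (rule has_field_derivative_at_within[OF DERIV_cmult_right[OF DERIV_cmult[OF e]]])
      show ?thesis unfolding q_def q'_def by (rule DERIV_add[OF d1 d2])
    qed
    have qpos0: "0 < q 0 x" if "x \<noteq> 0" for x
    proof -
      have "0 \<le> Re (qf (\<rho> 0) x)" using p0 by (simp add: psd_qf)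
      moreover have "0 < \<epsilon> * (norm x)\<^sup>2" using eps that by simp
      ultimately show ?thesis by (simp add: q_def)
    qed
    show ?thesis
    proof (rule ccontr)
      assume neg0: "\<not> ?thesis"
      define T where "T = {t. 0 \<le> t \<and> (\<exists>x. x \<noteq> 0 \<and> q t x \<le> 0)}"
      have "t \<in> T" unfolding T_def q_def using neg0 t x not_less by blast
      then have Tne: "T \<noteq> {}" by auto
      have Tbdd: "bdd_below T" by (auto simp: T_def bdd_below_def)
      define s where "s = Inf T"
      have s0: "0 \<le> s" unfolding s_def by (rule cInf_greatest[OF Tne]) (auto simp: T_def)
      have before: "0 < q t x" if "0 \<le> t" "t < s" "x \<noteq> 0" for t x
      proof (rule ccontr)
        assume "\<not> 0 < q t x"
        then have "t \<in> T" using that by (auto simp: T_def)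
        then have "s \<le> t" unfolding s_def by (rule cInf_lower[OF _ Tbdd])
        then show False using that by simp
      qed
      have "\<forall>n::nat. \<exists>t. t \<in> T \<and> t < s + inverse (real (Suc n))"
      proof
        fix n :: nat
        have "Inf T < s + inverse (real (Suc n))" by (simp add: s_def)
        then show "\<exists>t. t \<in> T \<and> t < s + inverse (real (Suc n))"
          using cInf_less_iff[OF Tne Tbdd] by blast
      qed
      then obtain tf where tf: "\<And>n. tf n \<in> T" "\<And>n. tf n < s + inverse (real (Suc n))"
        by metis
      have tfs: "\<And>n. s \<le> tf n" unfolding s_def using tf(1) by (rule cInf_lower[OF _ Tbdd])
      have "\<forall>n. \<exists>x. x \<noteq> 0 \<and> q (tf n) x \<le> 0" using tf(1) by (auto simp: T_def)
      then obtain xf where xf: "\<And>n. xf n \<noteq> 0" "\<And>n. q (tf n) (xf n) \<le> 0" by metis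
      define yf where "yf n = (1 / norm (xf n)) *\<^sub>R xf n" for n
      have qsc: "q t (r *\<^sub>R x) = r\<^sup>2 * q t x" for t r x
        by (simp add: q_def Re_qf_scaleR_vec power_mult_distrib algebra_simps)
      have yf1: "\<And>n. yf n \<in> sphere 0 1" using xf(1) by (simp add: yf_def)
      have yfq: "\<And>n. q (tf n) (yf n) \<le> 0"
        unfolding yf_def qsc using xf(2) by (simp add: mult_nonneg_nonpos)
      obtain y r where y: "y \<in> sphere 0 1" and r: "strict_mono r" and ylim: "(yf \<circ> r) \<longlonglongrightarrow> y"
        using seq_compactE[OF compact_imp_seq_compact[OF compact_sphere], of yf 0 1] yf1 by blast
      have tflim: "tf \<longlonglongrightarrow> s"
      proof (rule real_tendsto_sandwich[OF _ _ tendsto_const])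
        show "\<forall>\<^sub>F n in sequentially. s \<le> tf n" using tfs by simp
        show "\<forall>\<^sub>F n in sequentially. tf n \<le> s + inverse (real (Suc n))"
          using tf(2) by (simp add: less_imp_le)
        show "(\<lambda>n. s + inverse (real (Suc n))) \<longlonglongrightarrow> s"
          using tendsto_add[OF tendsto_const LIMSEQ_inverse_real_of_nat, of s] by simp
      qed
      have tfr: "(tf \<circ> r) \<longlonglongrightarrow> s" by (rule LIMSEQ_subseq_LIMSEQ[OF tflim r])
      have rholim: "((\<lambda>n. \<rho> ((tf \<circ> r) n)) \<longlonglongrightarrow> \<rho> s)"
      proof (rule continuous_on_tendsto_compose[OF cont tfr])
        show "s \<in> {0..}" using s0 by simp
        have "\<And>n. 0 \<le> tf (r n)" using s0 tfs order_trans by blast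
        then show "\<forall>\<^sub>F n in sequentially. (tf \<circ> r) n \<in> {0..}" by simp
      qed
      have qlim: "((\<lambda>n. q ((tf \<circ> r) n) ((yf \<circ> r) n)) \<longlonglongrightarrow> q s y)"
        unfolding q_def
        by (intro tendsto_intros tendsto_Re qf_tendsto rholim ylim tfr)
      have qsy: "q s y \<le> 0"
        by (rule LIMSEQ_le_const2[OF qlim]) (use yfq in simp)
      have y0: "y \<noteq> 0" using y by auto
      have spos: "0 < s"
      proof (rule ccontr)
        assume "\<not> 0 < s" then have "s = 0" using s0 by simp
        then show False using qpos0[OF y0] qsy by simp
      qed
      have qs_nonneg: "0 \<le> q s x" for x
      proof (cases "x = 0")
        case True then show ?thesis by (simp add: q_def qf_def)
      next
        case False
        have "((\<lambda>t. q t x) has_real_derivative q' s x) (at s)"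
          using dq[of s x] s0 at_within_ge0[OF spos] by simp
        then have "isCont (\<lambda>t. q t x) s" by (rule DERIV_isCont)
        then have "((\<lambda>t. q t x) \<longlongrightarrow> q s x) (at s)" by (simp add: isCont_def)
        then have lim: "((\<lambda>t. q t x) \<longlongrightarrow> q s x) (at_left s)"
          by (rule tendsto_within_subset) simp
        have "\<forall>\<^sub>F t in at_left s. t \<in> {0<..<s}" by (rule eventually_at_left_real[OF spos])
        then have ev: "\<forall>\<^sub>F t in at_left s. 0 \<le> q t x"
          by eventually_elim (use before False in \<open>auto intro: less_imp_le\<close>)
        show ?thesis by (rule tendsto_lowerbound[OF lim ev]) simp
      qed
      define S where "S = \<rho> s + (\<epsilon> * exp (a * s)) *\<^sub>R mat 1"
      have psdS: "psd S" unfolding S_def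
        by (rule psd_shift[OF sa[OF s0]]) (use qs_nonneg in \<open>simp add: q_def\<close>)
      have qS: "Re (qf S x) = q s x" for x
        by (simp add: S_def q_def qf_add qf_scaleR_mat qf_mat1 ip_self_Re)
      have qsy0: "q s y = 0" using qsy qs_nonneg[of y] by simp
      have Sy: "S *v y = 0" by (rule psd_kernel[OF psdS]) (simp add: qS qsy0)
      have ny: "norm y = 1" using y by simp
      have LS: "lindblad H L N (\<rho> s) = lindblad H L N S - (\<epsilon> * exp (a * s)) *\<^sub>R lindblad H L N (mat 1)"
        by (simp add: S_def lindblad_add lindblad_scaleR)
      have k: "0 \<le> Re (qf (lindblad H L N S) y)" by (rule nagumo_key[OF psdS Sy])
      have c1: "Re (qf (lindblad H L N (mat 1)) y) \<le> C" using C[of y] ny by simp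
      have ep: "0 < \<epsilon> * exp (a * s)" using eps by simp
      have "q' s y = Re (qf (lindblad H L N S) y) - (\<epsilon> * exp (a * s)) * Re (qf (lindblad H L N (mat 1)) y)
            + (\<epsilon> * exp (a * s)) * a"
        by (simp add: q'_def LS qf_diff qf_scaleR_mat ny algebra_simps)
      also have "\<dots> \<ge> 0 - (\<epsilon> * exp (a * s)) * C + (\<epsilon> * exp (a * s)) * a"
        using k c1 ep by (smt (verit) mult_left_mono)
      finally have "q' s y \<ge> (\<epsilon> * exp (a * s)) * (a - C)" by (simp add: algebra_simps)
      moreover have "0 < (\<epsilon> * exp (a * s)) * (a - C)" using ep by (simp add: a_def)
      ultimately have qpos: "0 < q' s y" by linarith
      have "((\<lambda>t. q t y) has_real_derivative q' s y) (at s)"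
        using dq[of s y] s0 at_within_ge0[OF spos] by simp
      from DERIV_pos_inc_left[OF this qpos]
      obtain d where d: "0 < d" "\<And>h. 0 < h \<Longrightarrow> h < d \<Longrightarrow> q (s - h) y < q s y" by blast
      define h where "h = min d s / 2"
      have "0 < h" "h < d" "h \<le> s" using d spos by (auto simp: h_def)
      then have "q (s - h) y < 0" using d(2) qsy0 by simp
      moreover have "0 < q (s - h) y"
        using before[of "s - h" y] \<open>0 < h\<close> \<open>h \<le> s\<close> y0 by simp
      ultimately show False by simp
    qed
  qed
  show ?thesis
    unfolding psd_qf
  proof (intro conjI allI)
    show "self_adjoint (\<rho> t)" by (rule sa[OF t])
    fix x
    show "0 \<le> Re (qf (\<rho> t) x)"
    proof (cases "x = 0")
      case True then show ?thesis by (simp add: qf_def)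
    next
      case False
      show ?thesis
      proof (rule ccontr)
        assume "\<not> ?thesis"
        then have neg: "Re (qf (\<rho> t) x) < 0" by simp
        define \<delta> where "\<delta> = - Re (qf (\<rho> t) x)"
        have dp: "0 < \<delta>" using neg by (simp add: \<delta>_def)
        define B where "B = exp (a * t) * (norm x)\<^sup>2"
        have Bp: "0 < B" using False by (simp add: B_def)
        define \<epsilon> where "\<epsilon> = \<delta> / (2 * B)"
        have epsp: "0 < \<epsilon>" using dp Bp by (simp add: \<epsilon>_def)
        have "0 < Re (qf (\<rho> t) x) + \<epsilon> * exp (a * t) * (norm x)\<^sup>2" by (rule PD[OF epsp t False])
        also have "\<epsilon> * exp (a * t) * (norm x)\<^sup>2 = \<delta> / 2"
          using Bp False by (simp add: \<epsilon>_def B_def field_simps)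
        finally show False using dp by (simp add: \<delta>_def)
      qed
    qed
  qed
qed



lemma comm_zero_iff: "comm A B = 0 \<longleftrightarrow> A ** B = B ** (A::'n::finite cmat)"
  by (simp add: comm_def)

lemma half_mscale: "(1/2) *\<^sub>m (A::'n::finite cmat) = (1/2::real) *\<^sub>R A"
  using mscale_real[of "1/2" A] by simp

lemma half_half: "(1/2::real) *\<^sub>R P + (1/2) *\<^sub>R P = (P::'a::real_vector)"
  by (simp flip: scaleR_add_left)
lemma half_zero: "P - (1/2::real) *\<^sub>R P - (1/2) *\<^sub>R P = (0::'a::real_vector)"
  by (metis half_half diff_diff_eq diff_self)
lemma two_cancel: "2 *\<^sub>R A = 2 *\<^sub>R B \<Longrightarrow> A = (B::'a::real_vector)"
  by simp

lemma gen_commuting: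
  fixes U W X :: "'n::finite cmat"
  assumes U: "cadj U ** U = mat 1" and UX: "U ** X = X ** U" and WX: "W ** X = X ** W"
    and W: "cadj W = W"
  shows "gen (U ** W) X = 0"
proof -
  have UX': "cadj U ** X ** U = X"
  proof -
    have "cadj U ** X ** U = cadj U ** (X ** U)" by (simp add: matrix_mul_assoc)
    also have "\<dots> = cadj U ** (U ** X)" by (simp add: UX)
    also have "\<dots> = X" by (simp add: matrix_mul_assoc U)
    finally show ?thesis .
  qed
  have a: "cadj (U ** W) ** X ** (U ** W) = X ** (W ** W)"
  proof -
    have "cadj (U ** W) ** X ** (U ** W) = W ** (cadj U ** X ** U) ** W"
      by (simp add: cadj_mm W matrix_mul_assoc)
    also have "\<dots> = W ** X ** W" by (simp add: UX')
    also have "\<dots> = X ** (W ** W)" by (simp add: WX matrix_mul_assoc)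
    finally show ?thesis .
  qed
  have b: "cadj (U ** W) ** (U ** W) = W ** W"
  proof -
    have "cadj (U ** W) ** (U ** W) = W ** (cadj U ** U) ** W"
      by (simp add: cadj_mm W matrix_mul_assoc)
    then show ?thesis by (simp add: U)
  qed
  have c: "(W ** W) ** X = X ** (W ** W)"
    by (metis WX matrix_mul_assoc)
  have d: "X ** cadj (U ** W) ** (U ** W) = X ** (W ** W)"
    by (simp add: matrix_mul_assoc[symmetric] b)
  show ?thesis
    unfolding gen_def a b c d half_mscale
    by (simp add: half_zero)
qed

lemma gen_sq:
  fixes L X :: "'n::finite cmat"
  shows "gen L (X ** X) = X ** gen L X + gen L X ** X + diss L X"
  apply (rule two_cancel)
  unfolding gen_def diss_def comm_def half_mscale
  by (simp add: mm_ldiff mm_rdiff matrix_add_ldistrib mm_rdistrib matrix_mul_assoc mm_scaleR_left mm_scaleR_right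
     scaleR_right_diff_distrib scaleR_right_distrib scaleR_2 algebra_simps)



lemma tr_cnj: "cnj (mtrace ((A::'n::finite cmat) ** B ** C)) = mtrace (cadj C ** cadj B ** cadj A)"
  by (simp add: mtrace_cadj[symmetric] cadj_mm matrix_mul_assoc)

lemma tr_cyc3: "mtrace ((A::'n::finite cmat) ** (B::'n cmat) ** (C::'n cmat)) = mtrace (B ** C ** A)"
  using mtrace_comm[of A "B ** C"] by (simp add: matrix_mul_assoc)

lemma Re_tr_swap:
  assumes "self_adjoint A" "self_adjoint B" "self_adjoint \<rho>"
  shows "Re (mtrace ((A::'n::finite cmat) ** B ** \<rho>)) = Re (mtrace (B ** A ** \<rho>))"
proof -
  have "cnj (mtrace (A ** B ** \<rho>)) = mtrace (\<rho> ** B ** A)"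
    using assms by (simp add: tr_cnj self_adjoint_def)
  also have "\<dots> = mtrace (B ** A ** \<rho>)" by (rule tr_cyc3)
  finally have "mtrace (B ** A ** \<rho>) = cnj (mtrace (A ** B ** \<rho>))" by simp
  then show ?thesis by simp
qed

lemma tr_cs:
  fixes P \<rho> X Y :: "'n::finite cmat"
  assumes P: "psd P" and \<rho>: "psd \<rho>"
  shows "(cmod (mtrace (cadj X ** P ** Y ** \<rho>)))\<^sup>2
     \<le> Re (mtrace (cadj X ** P ** X ** \<rho>)) * Re (mtrace (cadj Y ** P ** Y ** \<rho>))"
proof -
  define s where "s A B = mtrace (cadj A ** P ** B ** \<rho>)" for A B :: "'n cmat"
  have nn: "0 \<le> Re (s A A)" for A
    unfolding s_def using trace_psd(1)[OF psd_sandwich[OF P] \<rho>] by blast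
  have sw: "s B A = cnj (s A B)" for A B
  proof -
    have "cnj (s A B) = mtrace (cadj \<rho> ** cadj B ** cadj P ** A)"
      by (simp add: s_def mtrace_cadj[symmetric] cadj_mm matrix_mul_assoc)
    also have "\<dots> = mtrace (\<rho> ** cadj B ** P ** A)"
      using P \<rho> by (simp add: psd_def self_adjoint_def)
    also have "\<dots> = s B A"
      unfolding s_def using mtrace_comm[of \<rho> "cadj B ** P ** A"] by (simp add: matrix_mul_assoc)
    finally show ?thesis by simp
  qed
  have s1: "s (A1 + A2) B = s A1 B + s A2 B" for A1 A2 B
    unfolding s_def by (simp add: cadj_add mm_rdistrib mtrace_add)
  have s2: "s A (B1 + B2) = s A B1 + s A B2" for A B1 B2
    unfolding s_def by (simp add: matrix_add_ldistrib mm_rdistrib mtrace_add)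
  have s3: "s (c *\<^sub>m A) B = cnj c * s A B" for c A B
    unfolding s_def by (simp add: cadj_mscale mscale_mm_left mtrace_mscale)
  have s4: "s A (c *\<^sub>m B) = c * s A B" for c A B
    unfolding s_def by (simp add: mscale_mm_right mscale_mm_left mtrace_mscale)
  have ex: "s (X + z *\<^sub>m Y) (X + z *\<^sub>m Y) = s X X + z * s X Y + cnj z * s Y X + cnj z * z * s Y Y" for z
    by (simp add: s1 s2 s3 s4 algebra_simps)
  show ?thesis
  proof (rule cs_abstract)
    show "0 \<le> Re (mtrace (cadj X ** P ** X ** \<rho>))" "0 \<le> Re (mtrace (cadj Y ** P ** Y ** \<rho>))"
      using nn unfolding s_def by blast+
    fix z :: complex
    have "0 \<le> Re (s (X + z *\<^sub>m Y) (X + z *\<^sub>m Y))" by (rule nn)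
    also have "Re (s (X + z *\<^sub>m Y) (X + z *\<^sub>m Y)) = Re (s X X) + 2 * Re (z * s X Y) + (cmod z)\<^sup>2 * Re (s Y Y)"
      unfolding ex sw[of X Y] by (simp add: mult_cnj_sq power2_eq_square algebra_simps)
    finally show "0 \<le> Re (mtrace (cadj X ** P ** X ** \<rho>)) + 2 * Re (z * mtrace (cadj X ** P ** Y ** \<rho>))
       + (cmod z)\<^sup>2 * Re (mtrace (cadj Y ** P ** Y ** \<rho>))"
      by (simp add: s_def)
  qed
qed

lemma qf_cbound: "\<exists>C\<ge>0. \<forall>x. cmod (qf (M::'n::finite cmat) x) \<le> C * (norm x)\<^sup>2"
proof -
  obtain K where K: "\<And>x. norm (M *v x) \<le> K * norm x" using mv_bound by blast
  have "cmod (qf M x) \<le> \<bar>K\<bar> * (norm x)\<^sup>2" for x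
  proof -
    have "cmod (qf M x) \<le> norm x * norm (M *v x)" unfolding qf_def by (rule ip_bound)
    also have "\<dots> \<le> norm x * (\<bar>K\<bar> * norm x)"
    proof (rule mult_left_mono)
      have "K * norm x \<le> \<bar>K\<bar> * norm x" by (rule mult_right_mono) auto
      then show "norm (M *v x) \<le> \<bar>K\<bar> * norm x" using K[of x] by linarith
    qed simp
    finally show ?thesis by (simp add: power2_eq_square algebra_simps)
  qed
  then show ?thesis by (intro exI[of _ "\<bar>K\<bar>"]) auto
qed

lemma mtrace_outer_ip: "mtrace (outer v) = ip v v"
  using mtrace_outer[of "mat 1" v] by (simp add: qf_mat1)

lemma tr_bound: "\<exists>K. \<forall>\<rho>::'n::finite cmat. psd \<rho> \<longrightarrow> mtrace \<rho> = 1 \<longrightarrow> cmod (mtrace (M ** \<rho>)) \<le> K"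
proof -
  obtain C where C: "0 \<le> C" "\<And>x. cmod (qf (M::'n cmat) x) \<le> C * (norm x)\<^sup>2" using qf_cbound by blast
  have "cmod (mtrace (M ** \<rho>)) \<le> C" if p: "psd \<rho>" and t1: "mtrace \<rho> = 1" for \<rho> :: "'n cmat"
  proof -
    obtain v :: "'n \<Rightarrow> complex^'n" where v: "\<rho> = (\<Sum>k\<in>UNIV. outer (v k))"
      by (rule psd_decomp[OF p])
    have tip: "mtrace \<rho> = (\<Sum>k\<in>UNIV. ip (v k) (v k))" by (simp add: v mtrace_sum mtrace_outer_ip)
    have n1: "(\<Sum>k\<in>UNIV. (norm (v k))\<^sup>2) = 1"
      using t1 arg_cong[of _ _ Re, OF tip] by (simp add: Re_sum ip_self_Re)
    have "cmod (mtrace (M ** \<rho>)) = cmod (\<Sum>k\<in>UNIV. qf M (v k))"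
      unfolding v by (simp only: trace_outer_sum)
    also have "\<dots> \<le> (\<Sum>k\<in>UNIV. cmod (qf M (v k)))" by (rule norm_sum)
    also have "\<dots> \<le> (\<Sum>k\<in>UNIV. C * (norm (v k))\<^sup>2)" by (rule sum_mono) (rule C(2))
    also have "\<dots> = C" by (simp add: sum_distrib_left[symmetric] n1)
    finally show ?thesis .
  qed
  then show ?thesis by blast
qed



lemma Re_vd:
  assumes "((\<lambda>t. g t) has_vector_derivative g') (at t within S)"
  shows "((\<lambda>t. Re (g t)) has_real_derivative Re g') (at t within S)"
  using bounded_linear.has_vector_derivative[OF bounded_linear_Re assms]
  by (simp add: has_real_derivative_iff_has_vector_derivative)

lemma exp_neg_lim: "0 < (c::real) \<Longrightarrow> ((\<lambda>t. exp (c * - t)) \<longlongrightarrow> 0) at_top"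
  by (rule filterlim_compose[OF exp_at_bot
        filterlim_tendsto_pos_mult_at_bot[OF tendsto_const _ filterlim_uminus_at_bot_at_top]])

lemma tr_mscale_Re: "Re (mtrace ((complex_of_real c *\<^sub>m A) ** B)) = c * Re (mtrace ((A::'n::finite cmat) ** B))"
  by (simp add: mscale_mm_left mtrace_mscale)

lemma channel_decay:
  fixes \<rho> :: "real \<Rightarrow> 'n::finite cmat" and W G D :: "'n cmat"
  assumes dens: "\<And>t. 0 \<le> t \<Longrightarrow> psd (\<rho> t) \<and> mtrace (\<rho> t) = 1"
    and Wp: "psd W"
    and dW: "\<And>t. 0 \<le> t \<Longrightarrow> ((\<lambda>t. mtrace (W ** \<rho> t)) has_vector_derivative mtrace (G ** \<rho> t)) (at t within {0..})"
    and dW2: "\<And>t. 0 \<le> t \<Longrightarrow> ((\<lambda>t. mtrace ((W ** W) ** \<rho> t)) has_vector_derivative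
                 mtrace ((W ** G + G ** W + D) ** \<rho> t)) (at t within {0..})"
    and cond: "(\<exists>c>0. psd (- (complex_of_real c *\<^sub>m W) - G))
             \<or> (psd (0 - G) \<and> (\<exists>c>0. psd (D - complex_of_real c *\<^sub>m W)))"
  shows "((\<lambda>t. Re (mtrace (W ** \<rho> t))) \<longlongrightarrow> 0) at_top"
proof -
  define f where "f t = Re (mtrace (W ** \<rho> t))" for t
  define f' where "f' t = Re (mtrace (G ** \<rho> t))" for t
  have df: "(f has_real_derivative f' t) (at t within {0..})" if "0 \<le> t" for t
    unfolding f_def f'_def by (rule Re_vd[OF dW[OF that]])
  have f0: "0 \<le> f t" if "0 \<le> t" for t
    unfolding f_def using trace_psd(1)[OF Wp] dens[OF that] by blast
  have fneg: "f' t \<le> 0" if "0 \<le> t" for t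
  proof (cases "\<exists>c>0. psd (- (complex_of_real c *\<^sub>m W) - G)")
    case True
    then obtain c where c: "0 < c" "psd (- (complex_of_real c *\<^sub>m W) - G)" by blast
    have "0 \<le> Re (mtrace ((- (complex_of_real c *\<^sub>m W) - G) ** \<rho> t))"
      using trace_psd(1)[OF c(2)] dens[OF that] by blast
    then have "f' t \<le> - c * f t"
      by (simp add: f_def f'_def mm_rdiff mm_lminus mtrace_diff mtrace_minus tr_mscale_Re)
    moreover have "0 \<le> c * f t" using f0[OF that] c(1) by simp
    ultimately show ?thesis by linarith
  next
    case False
    with cond have P: "psd (0 - G)" by blast
    have "0 \<le> Re (mtrace ((0 - G) ** \<rho> t))"
      using trace_psd(1)[OF P] dens[OF that] by blast
    then show ?thesis by (simp add: f'_def mm_lminus mtrace_minus)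
  qed
  have small: "\<exists>t0\<ge>0. f t0 < e" if e: "0 < e" for e
  proof (cases "\<exists>c>0. psd (- (complex_of_real c *\<^sub>m W) - G)")
    case True
    then obtain c where c: "0 < c" "psd (- (complex_of_real c *\<^sub>m W) - G)" by blast
    have fle: "f' t \<le> - c * f t" if "0 \<le> t" for t
    proof -
      have "0 \<le> Re (mtrace ((- (complex_of_real c *\<^sub>m W) - G) ** \<rho> t))"
        using trace_psd(1)[OF c(2)] dens[OF that] by blast
      then show ?thesis
        by (simp add: f_def f'_def mm_rdiff mm_lminus mtrace_diff mtrace_minus tr_mscale_Re)
    qed
    define u where "u t = exp (c * t) * f t" for t
    have du: "(u has_real_derivative (exp (c * t) * c * f t + exp (c * t) * f' t)) (at t within {0..})"
      if "0 \<le> t" for t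
    proof -
      have e: "((\<lambda>t. exp (c * t)) has_real_derivative exp (c * t) * c) (at t within {0..})"
        by (rule has_field_derivative_at_within[OF DERIV_cong[OF DERIV_fun_exp[OF DERIV_cmult[OF DERIV_ident]]]]) simp
      show ?thesis unfolding u_def
        by (rule DERIV_cong[OF DERIV_mult[OF e df[OF that]]]) simp
    qed
    have un: "exp (c * t) * c * f t + exp (c * t) * f' t \<le> 0" if "0 \<le> t" for t
    proof -
      have "exp (c * t) * c * f t + exp (c * t) * f' t = exp (c * t) * (c * f t + f' t)"
        by (simp add: algebra_simps)
      moreover have "c * f t + f' t \<le> 0" using fle[OF that] by simp
      ultimately show ?thesis by (simp add: mult_nonneg_nonpos)
    qed
    have ub: "f t \<le> f 0 * exp (c * - t)" if "0 \<le> t" for t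
    proof -
      have "u t \<le> u 0" by (rule dec_within[OF du un _ that]) auto
      then have "exp (c * t) * f t \<le> f 0" by (simp add: u_def)
      then show ?thesis by (simp add: exp_minus field_simps)
    qed
    have "((\<lambda>t. f 0 * exp (c * - t)) \<longlongrightarrow> f 0 * 0) at_top"
      by (intro tendsto_mult tendsto_const exp_neg_lim c)
    then have "\<forall>\<^sub>F t in at_top. f 0 * exp (c * - t) < e"
      using e by (simp add: order_tendsto_iff)
    then obtain T where T: "\<And>t. T \<le> t \<Longrightarrow> f 0 * exp (c * - t) < e"
      by (auto simp: eventually_at_top_linorder)
    define t0 where "t0 = max T 0"
    have "f t0 < e" using ub[of t0] T[of t0] by (simp add: t0_def)
    then show ?thesis by (intro exI[of _ t0]) (simp add: t0_def)
  next
    case False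
    with cond have P: "psd (0 - G)" and "\<exists>c>0. psd (D - complex_of_real c *\<^sub>m W)" by blast+
    then obtain c where c: "0 < c" "psd (D - complex_of_real c *\<^sub>m W)" by blast
    have Psa: "cadj (0 - G) = 0 - G" using P by (simp add: psd_def self_adjoint_def)
    then have Gsa: "cadj G = G" by (simp add: cadj_minus)
    have Wsa: "cadj W = W" using Wp by (simp add: psd_def self_adjoint_def)
    obtain K0 where K0: "\<And>\<sigma>::'n cmat. psd \<sigma> \<Longrightarrow> mtrace \<sigma> = 1 \<Longrightarrow> cmod (mtrace ((W ** (0 - G) ** W) ** \<sigma>)) \<le> K0"
      using tr_bound[of "W ** (0 - G) ** W"] by blast
    obtain K1 where K1: "\<And>\<sigma>::'n cmat. psd \<sigma> \<Longrightarrow> mtrace \<sigma> = 1 \<Longrightarrow> cmod (mtrace ((W ** W) ** \<sigma>)) \<le> K1"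
      using tr_bound[of "W ** W"] by blast
    have K0p: "0 \<le> K0" using K0[of "\<rho> 0"] dens[of 0] by (meson norm_ge_zero order_trans order_refl)
    have K1p: "0 \<le> K1" using K1[of "\<rho> 0"] dens[of 0] by (meson norm_ge_zero order_trans order_refl)
    show ?thesis
    proof (rule ccontr)
      assume "\<not> (\<exists>t0\<ge>0. f t0 < e)"
      then have fe: "\<And>t. 0 \<le> t \<Longrightarrow> e \<le> f t" by (meson not_less)
      define \<eta> where "\<eta> = c * e / 2"
      have \<eta>p: "0 < \<eta>" using c e by (simp add: \<eta>_def)
      define g where "g t = Re (mtrace ((W ** W) ** \<rho> t))" for t
      define g' where "g' t = Re (mtrace ((W ** G + G ** W + D) ** \<rho> t))" for t
      have dg: "(g has_real_derivative g' t) (at t within {0..})" if "0 \<le> t" for t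
        unfolding g_def g'_def by (rule Re_vd[OF dW2[OF that]])
      have key: "c * e / 2 + (K0 / \<eta>) * f' t \<le> g' t" if t: "0 \<le> t" for t
      proof -
        have pr: "psd (\<rho> t)" and tr1: "mtrace (\<rho> t) = 1" using dens[OF t] by auto
        have rsa: "self_adjoint (\<rho> t)" using pr by (rule psd_self_adjoint)
        define x where "x = Re (mtrace (W ** G ** \<rho> t))"
        define p where "p = Re (mtrace ((0 - G) ** \<rho> t))"
        have pf: "p = - f' t" by (simp add: p_def f'_def mm_lminus mtrace_minus)
        have p0: "0 \<le> p" unfolding p_def using trace_psd(1)[OF P pr] .
        have a: "g' t = x + Re (mtrace (G ** W ** \<rho> t)) + Re (mtrace (D ** \<rho> t))"
          by (simp add: g'_def x_def mm_rdistrib mtrace_add)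
        have b: "Re (mtrace (G ** W ** \<rho> t)) = x"
          unfolding x_def
          by (rule Re_tr_swap[symmetric]) (use Gsa Wsa rsa in \<open>auto simp: self_adjoint_def\<close>)
        have cD: "c * f t \<le> Re (mtrace (D ** \<rho> t))"
        proof -
          have "0 \<le> Re (mtrace ((D - complex_of_real c *\<^sub>m W) ** \<rho> t))"
            using trace_psd(1)[OF c(2) pr] .
          then show ?thesis by (simp add: f_def mm_rdiff mtrace_diff tr_mscale_Re)
        qed
        have xsq: "x\<^sup>2 \<le> K0 * p"
        proof -
          have "mtrace (W ** G ** \<rho> t) = - mtrace (cadj W ** (0 - G) ** mat 1 ** \<rho> t)"
            by (simp add: Wsa mm_rminus mm_lminus mtrace_minus)
          then have "x\<^sup>2 \<le> (cmod (mtrace (cadj W ** (0 - G) ** mat 1 ** \<rho> t)))\<^sup>2"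
            unfolding x_def by (metis abs_Re_le_cmod norm_minus_cancel power2_le_iff_abs_le abs_ge_zero
                   order_trans abs_abs norm_ge_zero)
          also have "\<dots> \<le> Re (mtrace (cadj W ** (0 - G) ** W ** \<rho> t))
                 * Re (mtrace (cadj (mat 1) ** (0 - G) ** mat 1 ** \<rho> t))"
            by (rule tr_cs[OF P pr])
          also have "\<dots> = Re (mtrace ((W ** (0 - G) ** W) ** \<rho> t)) * p"
            by (simp add: Wsa cadj_mat p_def)
          also have "\<dots> \<le> K0 * p"
          proof (rule mult_right_mono[OF _ p0])
            show "Re (mtrace ((W ** (0 - G) ** W) ** \<rho> t)) \<le> K0"
              using K0[OF pr tr1] complex_Re_le_cmod order_trans by blast
          qed
          finally show ?thesis .
        qed
        have amgm: "2 * \<bar>x\<bar> \<le> \<eta> + K0 * p / \<eta>"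
        proof -
          have "0 \<le> (\<eta> - \<bar>x\<bar>)\<^sup>2" by simp
          then have "2 * \<eta> * \<bar>x\<bar> \<le> \<eta>\<^sup>2 + x\<^sup>2" by (simp add: power2_eq_square algebra_simps)
          also have "\<dots> \<le> \<eta>\<^sup>2 + K0 * p" using xsq by simp
          finally have "2 * \<bar>x\<bar> * \<eta> \<le> (\<eta> + K0 * p / \<eta>) * \<eta>"
            using \<eta>p by (simp add: power2_eq_square algebra_simps)
          then show ?thesis using \<eta>p by simp
        qed
        have "c * e \<le> c * f t" using fe[OF t] c(1) by simp
        then show ?thesis
          using a b cD amgm pf \<eta>p unfolding \<eta>_def by (simp add: field_simps)
      qed
      define h where "h t = g t - (K0 / \<eta>) * f t - (c * e / 2) * t" for t
      have dh: "(h has_real_derivative (g' t - (K0 / \<eta>) * f' t - c * e / 2)) (at t within {0..})"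
        if "0 \<le> t" for t
        unfolding h_def
        by (rule DERIV_cong[OF DERIV_diff[OF DERIV_diff[OF dg[OF that] DERIV_cmult[OF df[OF that]]]
              DERIV_cmult[OF DERIV_ident]]]) simp
      have hinc: "h 0 \<le> h t" if "0 \<le> t" for t
      proof -
        have kk: "0 \<le> g' t - K0 / \<eta> * f' t - c * e / 2" if "0 \<le> t" for t
          using key[OF that] by linarith
        show ?thesis
          by (rule inc_within[where f' = "\<lambda>t. g' t - K0 / \<eta> * f' t - c * e / 2", OF dh kk order_refl that])
      qed
      have gb: "\<bar>g t\<bar> \<le> K1" if "0 \<le> t" for t
        using K1[of "\<rho> t"] dens[OF that] abs_Re_le_cmod order_trans unfolding g_def by blast
      define T where "T = (2 * K1 + (K0 / \<eta>) * f 0 + 1) / (c * e / 2)"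
      have Tp: "0 \<le> T" using K1p K0p \<eta>p f0[of 0] c e by (simp add: T_def)
      have "h T \<le> K1 - (c * e / 2) * T"
        using gb[OF Tp] f0[OF Tp] K0p \<eta>p unfolding h_def
        by (smt (verit) divide_nonneg_pos mult_nonneg_nonneg)
      also have "(c * e / 2) * T = 2 * K1 + (K0 / \<eta>) * f 0 + 1"
        using c e by (simp add: T_def)
      finally have "h T \<le> - K1 - (K0 / \<eta>) * f 0 - 1" by simp
      moreover have "- K1 - (K0 / \<eta>) * f 0 \<le> h 0"
        using gb[of 0] by (simp add: h_def)
      moreover have "h 0 \<le> h T" by (rule hinc[OF Tp])
      ultimately show False by simp
    qed
  qed
  show ?thesis
    unfolding tendsto_iff dist_real_def
  proof (intro allI impI)
    fix e :: real assume e: "0 < e"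
    obtain t0 where t0: "0 \<le> t0" "f t0 < e" using small[OF e] by blast
    have "\<forall>t\<ge>t0. \<bar>f t - 0\<bar> < e"
    proof (intro allI impI)
      fix t assume "t0 \<le> t"
      have "f t \<le> f t0" by (rule dec_within[OF df fneg t0(1) \<open>t0 \<le> t\<close>])
      then show "\<bar>f t - 0\<bar> < e" using f0[of t] t0 \<open>t0 \<le> t\<close> by simp
    qed
    then show "\<forall>\<^sub>F t in at_top. \<bar>Re (mtrace (W ** \<rho> t)) - 0\<bar> < e"
      unfolding eventually_at_top_linorder f_def by blast
  qed
qed



section \<open>Eigenvalues\<close>

lemma inner_ip: "inner v w = Re (ip v (w::complex^'n::finite))"
  by (simp add: inner_vec_def inner_complex_def ip_def Re_sum)

lemma eig_qf: "W *v v = \<mu> *s v \<Longrightarrow> qf W v = \<mu> * ip v v"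
  by (simp add: qf_def ip_scale_right)

lemma eig_real:
  assumes "self_adjoint W" "W *v v = \<mu> *s v" "v \<noteq> 0"
  shows "Im \<mu> = 0"
proof -
  have q: "qf W v = \<mu> * complex_of_real ((norm v)\<^sup>2)"
    using eig_qf[OF assms(2)] by (simp add: ip_self norm_vec_def L2_set_def sum_nonneg)
  have "Im (qf W v) = 0" using self_adjoint_qf_real[OF assms(1), of v]
    by (metis Im_complex_of_real)
  then have "Im \<mu> * (norm v)\<^sup>2 = 0" by (simp add: q)
  then show ?thesis using assms(3) by simp
qed

lemma eig_orth:
  assumes sa: "self_adjoint W" and v: "W *v v = \<mu> *s v" "v \<noteq> 0" and w: "W *v w = \<nu> *s w" "w \<noteq> 0"
    and ne: "\<mu> \<noteq> \<nu>"
  shows "ip v w = 0"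
proof -
  have mr: "cnj \<mu> = \<mu>" using eig_real[OF sa v] by (simp add: complex_eq_iff)
  have "ip v (W *v w) = ip (cadj W *v v) w" by (rule ip_adj)
  then have "\<nu> * ip v w = cnj \<mu> * ip v w"
    using sa v w by (simp add: self_adjoint_def ip_scale_right ip_scale_left)
  then have "(\<nu> - \<mu>) * ip v w = 0" using mr by (simp add: algebra_simps)
  then show ?thesis using ne by simp
qed

lemma eig_finite:
  assumes sa: "self_adjoint (W::'n::finite cmat)"
  shows "finite {\<mu>. is_eigenvalue W \<mu>}"
proof -
  define E where "E = {\<mu>. is_eigenvalue W \<mu>}"
  define ev where "ev \<mu> = (SOME v. v \<noteq> 0 \<and> W *v v = \<mu> *s v)" for \<mu>
  have evp: "ev \<mu> \<noteq> 0 \<and> W *v ev \<mu> = \<mu> *s ev \<mu>" if "\<mu> \<in> E" for \<mu>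
    unfolding ev_def using that someI_ex[of "\<lambda>v. v \<noteq> 0 \<and> W *v v = \<mu> *s v"]
    by (auto simp: E_def is_eigenvalue_def)
  have inj: "inj_on ev E"
  proof (rule inj_onI)
    fix \<mu> \<nu> assume "\<mu> \<in> E" "\<nu> \<in> E" "ev \<mu> = ev \<nu>"
    then have "\<mu> *s ev \<mu> = \<nu> *s ev \<mu>" using evp \<open>\<mu> \<in> E\<close> \<open>\<nu> \<in> E\<close> by metis
    then have "(\<mu> - \<nu>) *s ev \<mu> = 0" by (simp add: vector_sub_rdistrib)
    moreover have "ev \<mu> \<noteq> 0" using evp[OF \<open>\<mu> \<in> E\<close>] by blast
    ultimately show "\<mu> = \<nu>" by (metis eq_iff_diff_eq_0 vector_mul_eq_0)
  qed
  have "pairwise orthogonal (ev ` E)"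
    unfolding pairwise_def orthogonal_def
  proof (clarify)
    fix \<mu> \<nu> assume m: "\<mu> \<in> E" and n: "\<nu> \<in> E" and d: "ev \<mu> \<noteq> ev \<nu>"
    then have "\<mu> \<noteq> \<nu>" by auto
    then have "ip (ev \<mu>) (ev \<nu>) = 0"
      using eig_orth[OF sa] evp[OF m] evp[OF n] by blast
    then show "ev \<mu> \<bullet> ev \<nu> = 0" by (simp add: inner_ip)
  qed
  moreover have "0 \<notin> ev ` E" using evp by auto
  ultimately have "independent (ev ` E)" by (rule pairwise_orthogonal_independent)
  then have "finite (ev ` E)" by (rule finiteI_independent)
  then show ?thesis using finite_imageD[OF _ inj] by (simp add: E_def)
qed

lemma eig_nonneg:
  assumes "psd W" "is_eigenvalue W \<mu>"
  shows "0 \<le> Re \<mu>"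
proof -
  obtain v where v: "v \<noteq> 0" "W *v v = \<mu> *s v" using assms(2) by (auto simp: is_eigenvalue_def)
  have "Re (qf W v) = Re \<mu> * (norm v)\<^sup>2"
    using eig_qf[OF v(2)] by (simp add: ip_self norm_vec_def L2_set_def sum_nonneg)
  moreover have "0 \<le> Re (qf W v)" using assms(1) by (simp add: psd_qf)
  ultimately show ?thesis using v(1) by (simp add: zero_le_mult_iff)
qed

lemma tr_lower:
  assumes m: "\<And>x. m * (norm x)\<^sup>2 \<le> Re (qf W x)" and p: "psd \<rho>" and t: "mtrace \<rho> = 1"
  shows "m \<le> Re (mtrace ((W::'n::finite cmat) ** \<rho>))"
proof -
  obtain v :: "'n \<Rightarrow> complex^'n" where v: "\<rho> = (\<Sum>k\<in>UNIV. outer (v k))"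
    by (rule psd_decomp[OF p])
  have tip: "mtrace \<rho> = (\<Sum>k\<in>UNIV. ip (v k) (v k))" by (simp add: v mtrace_sum mtrace_outer_ip)
  have n1: "(\<Sum>k\<in>UNIV. (norm (v k))\<^sup>2) = 1"
    using t arg_cong[of _ _ Re, OF tip] by (simp add: Re_sum ip_self_Re)
  have "m = (\<Sum>k\<in>UNIV. m * (norm (v k))\<^sup>2)" by (simp add: sum_distrib_left[symmetric] n1)
  also have "\<dots> \<le> (\<Sum>k\<in>UNIV. Re (qf W (v k)))" by (rule sum_mono) (rule m)
  also have "\<dots> = Re (mtrace (W ** \<rho>))" unfolding v trace_outer_sum by (simp add: Re_sum)
  finally show ?thesis .
qed

lemma ground_zero:
  fixes W :: "'n::finite cmat" and \<rho> :: "real \<Rightarrow> 'n cmat"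
  assumes Wp: "psd W" and dens: "\<And>t. 0 \<le> t \<Longrightarrow> psd (\<rho> t) \<and> mtrace (\<rho> t) = 1"
    and lim: "((\<lambda>t. Re (mtrace (W ** \<rho> t))) \<longlongrightarrow> 0) at_top"
  shows "smallest_eigenvalue W = 0"
proof -
  have ker: "\<exists>x. x \<noteq> 0 \<and> W *v x = 0"
  proof (rule ccontr)
    assume nk: "\<not> ?thesis"
    have pos: "0 < Re (qf W x)" if "x \<noteq> 0" for x
    proof -
      have "0 \<le> Re (qf W x)" using Wp by (simp add: psd_qf)
      moreover have "Re (qf W x) \<noteq> 0" using psd_kernel[OF Wp] nk that by blast
      ultimately show ?thesis by simp
    qed
    have cont: "continuous_on (sphere 0 1) (\<lambda>x. Re (qf W x))"
      unfolding continuous_on_def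
      by (intro ballI tendsto_Re qf_tendsto tendsto_const tendsto_ident_at)
    obtain y where y: "y \<in> sphere (0::complex^'n) 1" "\<And>z. z \<in> sphere 0 1 \<Longrightarrow> Re (qf W y) \<le> Re (qf W z)"
    proof -
      have "sphere (0::complex^'n) 1 \<noteq> {}" using vector_choose_size[of 1] by (auto simp: sphere_def)
      then show ?thesis using continuous_attains_inf[OF compact_sphere _ cont] that by blast
    qed
    define m where "m = Re (qf W y)"
    have mp: "0 < m" unfolding m_def by (rule pos) (use y(1) in auto)
    have mb: "m * (norm x)\<^sup>2 \<le> Re (qf W x)" for x
    proof (cases "x = 0")
      case True then show ?thesis by (simp add: qf_def)
    next
      case False
      define z where "z = (1 / norm x) *\<^sub>R x"
      have zs: "z \<in> sphere 0 1" using False by (simp add: z_def)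
      have xz: "x = norm x *\<^sub>R z" using False by (simp add: z_def)
      have "Re (qf W x) = (norm x)\<^sup>2 * Re (qf W z)"
        by (subst xz) (simp add: qf_scaleR_vec)
      moreover have "m \<le> Re (qf W z)" using y(2)[OF zs] by (simp add: m_def)
      ultimately show ?thesis using mult_right_mono[of m "Re (qf W z)" "(norm x)\<^sup>2"]
        by (simp add: mult.commute)
    qed
    have "\<forall>\<^sub>F t in at_top. Re (mtrace (W ** \<rho> t)) < m"
      using lim mp by (simp add: order_tendsto_iff)
    moreover have "\<forall>\<^sub>F t in at_top. m \<le> Re (mtrace (W ** \<rho> t))"
      unfolding eventually_at_top_linorder
      by (intro exI[of _ 0] allI impI tr_lower[OF mb]) (use dens in auto)
    ultimately have "\<forall>\<^sub>F t::real in at_top. False" by eventually_elim simp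
    then show False by simp
  qed
  define E where "E = {\<mu>. is_eigenvalue W \<mu>}"
  have fin: "finite E" unfolding E_def by (rule eig_finite[OF psd_self_adjoint[OF Wp]])
  have z: "0 \<in> E" using ker by (auto simp: E_def is_eigenvalue_def)
  have "Min (Re ` E) = 0"
  proof (rule Min_eqI)
    show "finite (Re ` E)" using fin by simp
    show "\<And>y. y \<in> Re ` E \<Longrightarrow> 0 \<le> y" using eig_nonneg[OF Wp] by (auto simp: E_def)
    show "0 \<in> Re ` E" using z by force
  qed
  then show ?thesis by (simp add: smallest_eigenvalue_def E_def)
qed



lemma tr_left_bounded_linear: "bounded_linear (\<lambda>A. mtrace ((M::'n::finite cmat) ** A))"
proof -
  have "linear (\<lambda>A. mtrace ((M::'n::finite cmat) ** A))"
    by (rule linearI) (simp_all add: matrix_add_ldistrib mtrace_add mm_scaleR_right mtrace_scaleR)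
  then show ?thesis using linear_conv_bounded_linear by blast
qed

lemma comm_sq:
  fixes A B :: "'n::finite cmat"
  assumes "A ** B = B ** A"
  shows "A ** (B ** B) = (B ** B) ** A"
proof -
  have "A ** (B ** B) = (A ** B) ** B" by (simp add: matrix_mul_assoc)
  also have "\<dots> = (B ** A) ** B" by (simp add: assms)
  also have "\<dots> = B ** (A ** B)" by (simp add: matrix_mul_assoc)
  also have "\<dots> = B ** (B ** A)" by (simp add: assms)
  also have "\<dots> = (B ** B) ** A" by (simp add: matrix_mul_assoc)
  finally show ?thesis .
qed

lemma sum_single:
  assumes "l \<in> S" "finite S" "\<And>k. k \<in> S \<Longrightarrow> k \<noteq> l \<Longrightarrow> f k = 0"
  shows "(\<Sum>k\<in>S. f k) = (f l :: 'a::comm_monoid_add)"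
proof -
  have "(\<Sum>k\<in>S. f k) = f l + (\<Sum>k\<in>S - {l}. f k)" by (rule sum.remove[OF assms(2,1)])
  also have "(\<Sum>k\<in>S - {l}. f k) = 0" by (rule sum.neutral) (use assms(3) in auto)
  finally show ?thesis by simp
qed

theorem corollary25:
  fixes H :: "'n::finite cmat"
    and W U :: "nat \<Rightarrow> 'n cmat"
    and N :: nat
  assumes H_sa: "self_adjoint H"
    and W_psd: "\<And>l. l \<in> {1..N} \<Longrightarrow> psd (W l)"
    and W_ground: "\<And>l. l \<in> {1..N} \<Longrightarrow> smallest_eigenvalue (W l) = 0"
    and W_H: "\<And>l. l \<in> {1..N} \<Longrightarrow> comm H (W l) = 0"
    and W_W: "\<And>l l'. l \<in> {1..N} \<Longrightarrow> l' \<in> {1..N} \<Longrightarrow> l \<noteq> l' \<Longrightarrow> comm (W l) (W l') = 0"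
    and U_unit: "\<And>k. k \<in> {1..N} \<Longrightarrow> unitary (U k)"
    and U_W: "\<And>k l. k \<in> {1..N} \<Longrightarrow> l \<in> {1..N} \<Longrightarrow> k \<noteq> l \<Longrightarrow> comm (U k) (W l) = 0"
    and cond: "\<And>l. l \<in> {1..N} \<Longrightarrow>
        (\<exists>c>0. loewner_le (gen (U l ** W l) (W l)) (- (complex_of_real c *\<^sub>m W l)))
      \<or> (loewner_le (gen (U l ** W l) (W l)) 0 \<and>
         (\<exists>c>0. loewner_le (complex_of_real c *\<^sub>m W l) (diss (U l ** W l) (W l))))"
  shows "ags_stable H (\<lambda>k. U k ** W k) N (\<Sum>l\<in>{1..N}. W l)"
  unfolding ags_stable_def
proof (intro allI impI)
  define L where "L = (\<lambda>k. U k ** W k)"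
  fix \<rho> :: "real \<Rightarrow> 'n cmat"
  assume A: "density_state (\<rho> 0) \<and>
        (\<forall>t\<ge>0. (\<rho> has_vector_derivative lindblad H (\<lambda>k. U k ** W k) N (\<rho> t)) (at t within {0..}))"
  have tr: "traj H L N \<rho>" using A by (simp add: traj_def L_def)
  have p0: "psd (\<rho> 0)" and t0: "mtrace (\<rho> 0) = 1" using A by (auto simp: density_state_def)
  have dens: "psd (\<rho> t) \<and> mtrace (\<rho> t) = 1" if "0 \<le> t" for t
    using traj_psd[OF H_sa tr p0 that] traj_trace[OF tr that] t0 by simp
  have dM: "((\<lambda>t. mtrace (M ** \<rho> t)) has_vector_derivative
      mtrace ((\<i> *\<^sub>m comm H M + (\<Sum>k\<in>{1..N}. gen (L k) M)) ** \<rho> t)) (at t within {0..})"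
    if "0 \<le> t" for t M
    using bounded_linear.has_vector_derivative[OF tr_left_bounded_linear traj_D[OF tr that], of M]
    by (simp add: trace_lindblad_heis)
  have Wsa: "cadj (W k) = W k" if "k \<in> {1..N}" for k
    using W_psd[OF that] by (simp add: psd_def self_adjoint_def)
  have Uu: "cadj (U k) ** U k = mat 1" if "k \<in> {1..N}" for k
    using U_unit[OF that] by (simp add: unitary_def)
  have each: "((\<lambda>t. Re (mtrace (W l ** \<rho> t))) \<longlongrightarrow> 0) at_top" if l: "l \<in> {1..N}" for l
  proof -
    have Ucom: "U k ** W l = W l ** U k" if "k \<in> {1..N}" "k \<noteq> l" for k
      using U_W[OF that(1) l that(2)] by (simp add: comm_zero_iff)
    have Wcom: "W k ** W l = W l ** W k" if "k \<in> {1..N}" "k \<noteq> l" for k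
      using W_W[OF that(1) l that(2)] by (simp add: comm_zero_iff)
    have g1: "gen (L k) (W l) = 0" if k: "k \<in> {1..N}" "k \<noteq> l" for k
      unfolding L_def by (rule gen_commuting[OF Uu[OF k(1)] Ucom[OF k] Wcom[OF k] Wsa[OF k(1)]])
    have g2: "gen (L k) (W l ** W l) = 0" if k: "k \<in> {1..N}" "k \<noteq> l" for k
    proof -
      have a: "U k ** (W l ** W l) = (W l ** W l) ** U k"
        by (rule comm_sq[OF Ucom[OF k]])
      have b: "W k ** (W l ** W l) = (W l ** W l) ** W k"
        by (rule comm_sq[OF Wcom[OF k]])
      show ?thesis unfolding L_def by (rule gen_commuting[OF Uu[OF k(1)] a b Wsa[OF k(1)]])
    qed
    have hc1: "comm H (W l) = 0" by (rule W_H[OF l])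
    then have HW: "H ** W l = W l ** H" by (simp add: comm_zero_iff)
    have hc2: "comm H (W l ** W l) = 0"
      unfolding comm_zero_iff by (rule comm_sq[OF HW])
    have s1: "(\<Sum>k\<in>{1..N}. gen (L k) (W l)) = gen (L l) (W l)"
      by (rule sum_single[OF l]) (use g1 in auto)
    have s2: "(\<Sum>k\<in>{1..N}. gen (L k) (W l ** W l)) = gen (L l) (W l ** W l)"
      by (rule sum_single[OF l]) (use g2 in auto)
    show ?thesis
    proof (rule channel_decay[where G = "gen (L l) (W l)" and D = "diss (L l) (W l)"])
      show "\<And>t. 0 \<le> t \<Longrightarrow> psd (\<rho> t) \<and> mtrace (\<rho> t) = 1" by (rule dens)
      show "psd (W l)" by (rule W_psd[OF l])
      show "((\<lambda>t. mtrace (W l ** \<rho> t)) has_vector_derivative mtrace (gen (L l) (W l) ** \<rho> t)) (at t within {0..})"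
        if "0 \<le> t" for t
        using dM[OF that, of "W l"] unfolding hc1 s1 by simp
      show "((\<lambda>t. mtrace ((W l ** W l) ** \<rho> t)) has_vector_derivative
          mtrace ((W l ** gen (L l) (W l) + gen (L l) (W l) ** W l + diss (L l) (W l)) ** \<rho> t)) (at t within {0..})"
        if "0 \<le> t" for t
        using dM[OF that, of "W l ** W l"] unfolding hc2 s2 by (simp only: gen_sq mscale_zero add_0_left)
      show "(\<exists>c>0. psd (- (complex_of_real c *\<^sub>m W l) - gen (L l) (W l)))
          \<or> (psd (0 - gen (L l) (W l)) \<and> (\<exists>c>0. psd (diss (L l) (W l) - complex_of_real c *\<^sub>m W l)))"
        using cond[OF l] by (simp add: loewner_le_def L_def)
    qed
  qed
  have real: "mtrace (W l ** \<rho> t) = complex_of_real (Re (mtrace (W l ** \<rho> t)))"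
    if "l \<in> {1..N}" "0 \<le> t" for l t
    using trace_psd(2)[OF W_psd[OF that(1)], of "\<rho> t"] dens[OF that(2)] by (simp add: complex_eq_iff)
  have tsum: "mtrace ((\<Sum>l\<in>{1..N}. W l) ** \<rho> t) = (\<Sum>l\<in>{1..N}. mtrace (W l ** \<rho> t))" for t
    by (simp add: mm_lsum mtrace_sum)
  have lim0: "((\<lambda>t. \<Sum>l\<in>{1..N}. complex_of_real (Re (mtrace (W l ** \<rho> t)))) \<longlongrightarrow> 0) at_top"
  proof -
    have "((\<lambda>t. \<Sum>l\<in>{1..N}. complex_of_real (Re (mtrace (W l ** \<rho> t))))
        \<longlongrightarrow> (\<Sum>l\<in>{1..N}. complex_of_real 0)) at_top"
      by (intro tendsto_sum tendsto_of_real each)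
    then show ?thesis by simp
  qed
  have ev: "\<forall>\<^sub>F t in at_top. (\<Sum>l\<in>{1..N}. complex_of_real (Re (mtrace (W l ** \<rho> t))))
      = mtrace ((\<Sum>l\<in>{1..N}. W l) ** \<rho> t)"
    unfolding eventually_at_top_linorder
  proof (intro exI[of _ 0] allI impI)
    fix t :: real assume t: "0 \<le> t"
    have "(\<Sum>l\<in>{1..N}. complex_of_real (Re (mtrace (W l ** \<rho> t)))) = (\<Sum>l\<in>{1..N}. mtrace (W l ** \<rho> t))"
      by (rule sum.cong[OF refl]) (rule real[symmetric], simp_all add: t)
    then show "(\<Sum>l\<in>{1..N}. complex_of_real (Re (mtrace (W l ** \<rho> t)))) = mtrace ((\<Sum>l\<in>{1..N}. W l) ** \<rho> t)"
      by (simp only: tsum)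
  qed
  have limW: "((\<lambda>t. mtrace ((\<Sum>l\<in>{1..N}. W l) ** \<rho> t)) \<longlongrightarrow> 0) at_top"
    by (rule tendsto_cong[THEN iffD1, OF ev lim0])
  have sm: "smallest_eigenvalue (\<Sum>l\<in>{1..N}. W l) = 0"
  proof (rule ground_zero)
    show "psd (\<Sum>l\<in>{1..N}. W l)" by (rule psd_sum) (rule W_psd)
    show "\<And>t. 0 \<le> t \<Longrightarrow> psd (\<rho> t) \<and> mtrace (\<rho> t) = 1" by (rule dens)
    show "((\<lambda>t. Re (mtrace ((\<Sum>l\<in>{1..N}. W l) ** \<rho> t))) \<longlongrightarrow> 0) at_top"
      using tendsto_Re[OF limW] by simp
  qed
  from sm show "((\<lambda>t. mtrace ((\<Sum>l\<in>{1..N}. W l) ** \<rho> t)) \<longlongrightarrow> complex_of_real (smallest_eigenvalue (\<Sum>l\<in>{1..N}. W l))) at_top"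
    using limW by simp
qed

end
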